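(* Let $\rho_0,\rho_1$ be two density matrices of the same dimension, where $\rho_0$ is realized as the mixture $\{p^0_i,|\alpha^0_i\rangle\}$ and $\rho_1$ as the mixture $\{p^1_i,|\alpha^1_i\rangle\}$ of pure states. Consider the protocol in which, to encode $b\in\{0,1\}$, an honest Alice picks $|\alpha^b_i\rangle$ with probability $p^b_i$ and sends it to Bob; at revealing time Alice sends $b$ and $i$ to Bob, and Bob tests whether Alice is cheating by projecting his state onto $|\alpha^b_i\rangle$ (he detects cheating if the projection fails). Let $f=f(\rho_0,\rho_1)$ be the fidelity. Then for any $0\le\alpha\le\pi/4$ there exists a strategy for Alice (a common deposit, together with a "zero" reveal strategy and a "one" reveal strategy) with advantage $\sqrt{f}\,\sin(2\alpha)/2$ and probability of detection at most $\frac{(1-f)\sin^2(\alpha)}{2}$.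
   Context: The fidelity of density matrices $\rho_0,\rho_1$ on the same space is $f(\rho_0,\rho_1)=\sup|\langle\phi_0|\phi_1\rangle|^2$, the supremum over all purifications $|\phi_0\rangle$ of $\rho_0$ and $|\phi_1\rangle$ of $\rho_1$ into a common larger Hilbert space. A cheating Alice prepares an arbitrary joint state of her registers and the register sent to Bob, and at reveal time uses either a zero strategy or a one strategy (each sending some $b$ and $i$); her advantage is the amount by which the probability of revealing $b=0$ under the zero strategy exceeds the probability of revealing $b=0$ under the one strategy, the latter being $1/2$ here, and the probability of detection is the probability that Bob's projection test fails. *)

theory Defs
  imports Complex_Main
begin

text \<open>Bob's register is C^n: a vector is a function nat => complex of which
only the entries k < n matter. A bipartite vector on (Alice register C^m) (x) (Bob register C^n)
is a function  psi :: nat => nat => complex, psi a k the coefficient of |a>|k>, a < m, k < n.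
Bits b are the naturals 0 and 1.\<close>

definition unit_vec :: "nat \<Rightarrow> (nat \<Rightarrow> complex) \<Rightarrow> bool" where
  "unit_vec n x \<longleftrightarrow> (\<Sum>k<n. (cmod (x k))\<^sup>2) = 1"

definition unit_bivec :: "nat \<Rightarrow> nat \<Rightarrow> (nat \<Rightarrow> nat \<Rightarrow> complex) \<Rightarrow> bool" where
  "unit_bivec m n psi \<longleftrightarrow> (\<Sum>a<m. \<Sum>k<n. (cmod (psi a k))\<^sup>2) = 1"

definition mixture_dm :: "nat \<Rightarrow> (nat \<Rightarrow> real) \<Rightarrow> (nat \<Rightarrow> nat \<Rightarrow> complex) \<Rightarrow> nat \<Rightarrow> nat \<Rightarrow> complex"
  where "mixture_dm N p v j k = (\<Sum>i<N. complex_of_real (p i) * v i j * cnj (v i k))"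

definition is_mixture :: "nat \<Rightarrow> nat \<Rightarrow> (nat \<Rightarrow> real) \<Rightarrow> (nat \<Rightarrow> nat \<Rightarrow> complex) \<Rightarrow> bool" where
  "is_mixture n N p v \<longleftrightarrow> (\<forall>i<N. p i \<ge> 0) \<and> (\<Sum>i<N. p i) = 1 \<and> (\<forall>i<N. unit_vec n (v i))"

text \<open>phi (on C^m (x) C^n) is a purification of the n x n matrix rho: Tr_A |phi><phi| = rho.\<close>
definition purification :: "nat \<Rightarrow> nat \<Rightarrow> (nat \<Rightarrow> nat \<Rightarrow> complex) \<Rightarrow> (nat \<Rightarrow> nat \<Rightarrow> complex) \<Rightarrow> bool" where
  "purification m n rho phi \<longleftrightarrow> (\<forall>j<n. \<forall>k<n. (\<Sum>a<m. phi a j * cnj (phi a k)) = rho j k)"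

definition bi_inner :: "nat \<Rightarrow> nat \<Rightarrow> (nat \<Rightarrow> nat \<Rightarrow> complex) \<Rightarrow> (nat \<Rightarrow> nat \<Rightarrow> complex) \<Rightarrow> complex" where
  "bi_inner m n phi psi = (\<Sum>a<m. \<Sum>k<n. cnj (phi a k) * psi a k)"

definition fidelity :: "nat \<Rightarrow> (nat \<Rightarrow> nat \<Rightarrow> complex) \<Rightarrow> (nat \<Rightarrow> nat \<Rightarrow> complex) \<Rightarrow> real" where
  "fidelity n rho0 rho1 = Sup {(cmod (bi_inner m n phi0 phi1))\<^sup>2 | m phi0 phi1.
      purification m n rho0 phi0 \<and> purification m n rho1 phi1}"

definition qform :: "nat \<Rightarrow> (nat \<Rightarrow> nat \<Rightarrow> complex) \<Rightarrow> (nat \<Rightarrow> complex) \<Rightarrow> complex" where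
  "qform m E x = (\<Sum>a<m. \<Sum>a'<m. cnj (x a) * E a a' * x a')"

definition psd :: "nat \<Rightarrow> (nat \<Rightarrow> nat \<Rightarrow> complex) \<Rightarrow> bool" where
  "psd m E \<longleftrightarrow> (\<forall>x. qform m E x \<in> \<real> \<and> Re (qform m E x) \<ge> 0)"

text \<open>A reveal strategy: a POVM {E b i} on Alice's register C^m, whose outcome (b,i)
(b in {0,1}, i < N b) is the message Alice sends to Bob.\<close>
definition reveal_povm :: "nat \<Rightarrow> (nat \<Rightarrow> nat) \<Rightarrow> (nat \<Rightarrow> nat \<Rightarrow> nat \<Rightarrow> nat \<Rightarrow> complex) \<Rightarrow> bool" where
  "reveal_povm m N E \<longleftrightarrow> (\<forall>b<2. \<forall>i<N b. psd m (E b i)) \<and>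
     (\<forall>a<m. \<forall>a'<m. (\<Sum>b<2. \<Sum>i<N b. E b i a a') = (if a = a' then 1 else 0))"

text \<open>Probability that Alice sends (b,i): <psi| E b i (x) I |psi>.\<close>
definition prob_send :: "nat \<Rightarrow> nat \<Rightarrow> (nat \<Rightarrow> nat \<Rightarrow> complex) \<Rightarrow> (nat \<Rightarrow> nat \<Rightarrow> complex) \<Rightarrow> real" where
  "prob_send m n psi Ebi = Re (\<Sum>k<n. qform m Ebi (\<lambda>a. psi a k))"

text \<open>Probability that Alice sends (b,i) and Bob's projection onto |w> = |alpha^b_i> succeeds:
 <psi| E b i (x) |w><w| |psi>.\<close>
definition prob_send_pass :: "nat \<Rightarrow> nat \<Rightarrow> (nat \<Rightarrow> nat \<Rightarrow> complex) \<Rightarrow> (nat \<Rightarrow> nat \<Rightarrow> complex) \<Rightarrow> (nat \<Rightarrow> complex) \<Rightarrow> real" where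
  "prob_send_pass m n psi Ebi w = Re (qform m Ebi (\<lambda>a. \<Sum>k<n. cnj (w k) * psi a k))"

definition prob_reveal0 :: "nat \<Rightarrow> nat \<Rightarrow> (nat \<Rightarrow> nat) \<Rightarrow> (nat \<Rightarrow> nat \<Rightarrow> complex) \<Rightarrow> (nat \<Rightarrow> nat \<Rightarrow> nat \<Rightarrow> nat \<Rightarrow> complex) \<Rightarrow> real" where
  "prob_reveal0 m n N psi E = (\<Sum>i<N 0. prob_send m n psi (E 0 i))"

text \<open>Probability that Bob's test fails, v b i = |alpha^b_i>.\<close>
definition prob_detect :: "nat \<Rightarrow> nat \<Rightarrow> (nat \<Rightarrow> nat) \<Rightarrow> (nat \<Rightarrow> nat \<Rightarrow> nat \<Rightarrow> complex) \<Rightarrow> (nat \<Rightarrow> nat \<Rightarrow> complex) \<Rightarrow> (nat \<Rightarrow> nat \<Rightarrow> nat \<Rightarrow> nat \<Rightarrow> complex) \<Rightarrow> real" where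
  "prob_detect m n N v psi E =
     (\<Sum>b<2. \<Sum>i<N b. prob_send m n psi (E b i) - prob_send_pass m n psi (E b i) (v b i))"

end

theory Submission
  imports Defs
begin
definition ip :: "nat \<Rightarrow> (nat \<Rightarrow> complex) \<Rightarrow> (nat \<Rightarrow> complex) \<Rightarrow> complex" where
  "ip m x y = (\<Sum>a<m. cnj (x a) * y a)"

definition nrm2 :: "nat \<Rightarrow> (nat \<Rightarrow> complex) \<Rightarrow> real" where
  "nrm2 m x = (\<Sum>a<m. (cmod (x a))\<^sup>2)"

lemma cnj_mult_self: "cnj z * z = complex_of_real ((cmod z)\<^sup>2)"
  by (metis complex_norm_square mult.commute)

lemma ip_self: "ip m x x = complex_of_real (nrm2 m x)"
  unfolding ip_def nrm2_def by (simp add: cnj_mult_self)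

lemma nrm2_nonneg: "nrm2 m x \<ge> 0"
  unfolding nrm2_def by (simp add: sum_nonneg)

lemma ip_cnj: "cnj (ip m x y) = ip m y x"
  unfolding ip_def by (simp add: mult.commute)

lemma ip_cong: "(\<And>a. a < m \<Longrightarrow> x a = x' a) \<Longrightarrow> (\<And>a. a < m \<Longrightarrow> y a = y' a) \<Longrightarrow> ip m x y = ip m x' y'"
  unfolding ip_def by (intro sum.cong) auto

lemma ip_sum_right: "ip m x (\<lambda>a. \<Sum>s\<in>S. f s * w s a) = (\<Sum>s\<in>S. f s * ip m x (w s))"
  unfolding ip_def by (simp add: sum_distrib_left sum_distrib_right mult.assoc mult.left_commute sum.swap[of _ S])

lemma ip_sum_left: "ip m (\<lambda>a. \<Sum>s\<in>S. f s * w s a) y = (\<Sum>s\<in>S. cnj (f s) * ip m (w s) y)"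
  unfolding ip_def by (simp add: sum_distrib_left sum_distrib_right mult.assoc mult.left_commute sum.swap[of _ S] cnj_sum)

lemma ip_diff_right: "ip m x (\<lambda>a. y a - z a) = ip m x y - ip m x z"
  unfolding ip_def by (simp add: algebra_simps sum_subtractf)

lemma ip_diff_left: "ip m (\<lambda>a. y a - z a) x = ip m y x - ip m z x"
  unfolding ip_def by (simp add: algebra_simps sum_subtractf)

lemma ip_add_right: "ip m x (\<lambda>a. y a + z a) = ip m x y + ip m x z"
  unfolding ip_def by (simp add: algebra_simps sum.distrib)

lemma ip_div_right: "ip m x (\<lambda>a. y a / r) = ip m x y / r"
  unfolding ip_def by (simp add: sum_divide_distrib)

lemma ip_div_left: "ip m (\<lambda>a. y a / r) x = ip m y x / cnj r"
  unfolding ip_def by (simp add: sum_divide_distrib)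

lemma nrm2_zero: "nrm2 m x = 0 \<Longrightarrow> a < m \<Longrightarrow> x a = 0"
  unfolding nrm2_def
  by (subst (asm) sum_nonneg_eq_0_iff) auto

lemma ip_zero_left: "(\<And>a. a < m \<Longrightarrow> x a = 0) \<Longrightarrow> ip m x y = 0"
  unfolding ip_def by simp

lemma real_CS:
  fixes a b :: "'a \<Rightarrow> real"
  shows "(\<Sum>i\<in>I. a i * b i)\<^sup>2 \<le> (\<Sum>i\<in>I. (a i)\<^sup>2) * (\<Sum>i\<in>I. (b i)\<^sup>2)"
proof (cases "(\<Sum>i\<in>I. (b i)\<^sup>2) > 0")
  case False
  then consider "\<And>i. i\<in>I \<Longrightarrow> b i = 0" | "infinite I"
    by (metis (mono_tags, lifting) sum_pos2 zero_le_power2 zero_less_power2)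
  thus ?thesis
    by fastforce
next
  case True
  define r where "r \<equiv> (\<Sum>i\<in>I. a i * b i) / (\<Sum>i\<in>I. (b i)\<^sup>2)"
  have "0 \<le> (\<Sum>i\<in>I. (a i - r * b i)\<^sup>2)"
    by (simp add: sum_nonneg)
  also have "... = (\<Sum>i\<in>I. (a i)\<^sup>2) - 2 * r * (\<Sum>i\<in>I. a i * b i) + r\<^sup>2 * (\<Sum>i\<in>I. (b i)\<^sup>2)"
    by (simp add: algebra_simps power2_eq_square sum_distrib_left flip: sum.distrib)
  also have "\<dots> = (\<Sum>i\<in>I. (a i)\<^sup>2) - ((\<Sum>i\<in>I. a i * b i))\<^sup>2 / (\<Sum>i\<in>I. (b i)\<^sup>2)"
    by (simp add: r_def power2_eq_square)
  finally have "0 \<le> (\<Sum>i\<in>I. (a i)\<^sup>2) - ((\<Sum>i\<in>I. a i * b i))\<^sup>2 / (\<Sum>i\<in>I. (b i)\<^sup>2)" .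
  hence "((\<Sum>i\<in>I. a i * b i))\<^sup>2 / (\<Sum>i\<in>I. (b i)\<^sup>2) \<le> (\<Sum>i\<in>I. (a i)\<^sup>2)"
    by (simp add: le_diff_eq)
  thus "((\<Sum>i\<in>I. a i * b i))\<^sup>2 \<le> (\<Sum>i\<in>I. (a i)\<^sup>2) * (\<Sum>i\<in>I. (b i)\<^sup>2)"
    by (simp add: pos_divide_le_eq True)
qed

lemma complex_CS:
  fixes x y :: "'a \<Rightarrow> complex"
  shows "(cmod (\<Sum>i\<in>I. cnj (x i) * y i))\<^sup>2 \<le> (\<Sum>i\<in>I. (cmod (x i))\<^sup>2) * (\<Sum>i\<in>I. (cmod (y i))\<^sup>2)"
proof -
  have "cmod (\<Sum>i\<in>I. cnj (x i) * y i) \<le> (\<Sum>i\<in>I. cmod (x i) * cmod (y i))"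
    by (rule order_trans[OF norm_sum]) (simp add: norm_mult)
  hence "(cmod (\<Sum>i\<in>I. cnj (x i) * y i))\<^sup>2 \<le> (\<Sum>i\<in>I. cmod (x i) * cmod (y i))\<^sup>2"
    by (simp add: power_mono)
  also have "\<dots> \<le> (\<Sum>i\<in>I. (cmod (x i))\<^sup>2) * (\<Sum>i\<in>I. (cmod (y i))\<^sup>2)"
    by (rule real_CS)
  finally show ?thesis .
qed

lemma complex_CS':
  fixes x y :: "'a \<Rightarrow> complex"
  shows "cmod (\<Sum>i\<in>I. cnj (x i) * y i) \<le> sqrt (\<Sum>i\<in>I. (cmod (x i))\<^sup>2) * sqrt (\<Sum>i\<in>I. (cmod (y i))\<^sup>2)"
proof -
  have "(cmod (\<Sum>i\<in>I. cnj (x i) * y i))\<^sup>2 \<le> (sqrt (\<Sum>i\<in>I. (cmod (x i))\<^sup>2) * sqrt (\<Sum>i\<in>I. (cmod (y i))\<^sup>2))\<^sup>2"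
    using complex_CS[of x y I] by (simp add: power_mult_distrib sum_nonneg)
  thus ?thesis
    by (rule power2_le_imp_le) (simp add: sum_nonneg)
qed

lemma sum_single_nz:
  assumes "finite S" "s \<in> S" "\<And>t. t \<in> S \<Longrightarrow> t \<noteq> s \<Longrightarrow> f t = 0"
  shows "sum f S = f s"
  using assms by (simp add: sum.remove sum.neutral)

lemma ip_swap: "ip m y x = cnj (ip m x y)"
  by (simp add: ip_cnj)

lemma gs_step:
  fixes c d :: "nat \<Rightarrow> nat \<Rightarrow> complex"
  assumes G: "\<forall>j<n. \<forall>k<n. ip m (c j) (c k) = ip N (d j) (d k)"
  shows "K \<le> n \<Longrightarrow> \<exists>w u. (\<forall>s<K. \<forall>t<K. ip m (w s) (w t) = ip N (u s) (u t))
   \<and> (\<forall>s<K. \<forall>t<K. s \<noteq> t \<longrightarrow> ip m (w s) (w t) = 0)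
   \<and> (\<forall>s<K. ip m (w s) (w s) = 0 \<or> ip m (w s) (w s) = 1)
   \<and> (\<forall>s<K. \<forall>j<n. ip m (w s) (c j) = ip N (u s) (d j))
   \<and> (\<forall>k<K. \<forall>a<m. c k a = (\<Sum>s<K. ip m (w s) (c k) * w s a))"
proof (induction K)
  case 0
  show ?case by auto
next
  case (Suc K)
  then have Kn: "K < n" by simp
  from Suc obtain w u where
    I1: "\<forall>s<K. \<forall>t<K. ip m (w s) (w t) = ip N (u s) (u t)" and
    I2: "\<forall>s<K. \<forall>t<K. s \<noteq> t \<longrightarrow> ip m (w s) (w t) = 0" and
    I2': "\<forall>s<K. ip m (w s) (w s) = 0 \<or> ip m (w s) (w s) = 1" and
    I3: "\<forall>s<K. \<forall>j<n. ip m (w s) (c j) = ip N (u s) (d j)" and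
    I5: "\<forall>k<K. \<forall>a<m. c k a = (\<Sum>s<K. ip m (w s) (c k) * w s a)"
    by auto
  define \<gamma> where "\<gamma> s = ip m (w s) (c K)" for s
  define rc where "rc a = c K a - (\<Sum>s<K. \<gamma> s * w s a)" for a
  define rd where "rd i = d K i - (\<Sum>s<K. \<gamma> s * u s i)" for i
  define nu where "nu = complex_of_real (sqrt (nrm2 m rc))"
  define w' where "w' = w(K := (\<lambda>a. rc a / nu))"
  define u' where "u' = u(K := (\<lambda>i. rd i / nu))"
  have rc_eq: "rc = (\<lambda>a. c K a - (\<Sum>s<K. \<gamma> s * w s a))" using rc_def by auto
  have rd_eq: "rd = (\<lambda>i. d K i - (\<Sum>s<K. \<gamma> s * u s i))" using rd_def by auto
  have gu: "\<gamma> s = ip N (u s) (d K)" if "s < K" for s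
    using I3 that Kn by (simp add: \<gamma>_def)
  have wexp: "ip m (w t) rc = \<gamma> t - (\<Sum>s<K. \<gamma> s * ip m (w t) (w s))" for t
    unfolding rc_eq ip_diff_right ip_sum_right \<gamma>_def by simp
  have uexp: "ip N (u t) rd = \<gamma> t - (\<Sum>s<K. \<gamma> s * ip m (w t) (w s))" if "t < K" for t
    unfolding rd_eq ip_diff_right ip_sum_right using that gu I1 by simp
  have F1: "ip m (w t) rc = 0" if t: "t < K" for t
  proof -
    have "(\<Sum>s<K. \<gamma> s * ip m (w t) (w s)) = \<gamma> t * ip m (w t) (w t)"
      by (rule sum_single_nz) (use t I2 in auto)
    moreover have "\<gamma> t = \<gamma> t * ip m (w t) (w t)"
    proof (cases "ip m (w t) (w t) = 1")
      case False
      then have "ip m (w t) (w t) = 0" using I2' t by auto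
      then have "nrm2 m (w t) = 0" by (simp add: ip_self)
      then have "\<gamma> t = 0" unfolding \<gamma>_def by (intro ip_zero_left) (auto dest: nrm2_zero)
      then show ?thesis by simp
    qed simp
    ultimately show ?thesis using wexp[of t] by simp
  qed
  have F2: "ip N (u t) rd = ip m (w t) rc" if "t < K" for t
    using wexp[of t] uexp[OF that] by simp
  have F3: "ip m rc (c j) = ip N rd (d j)" if "j < n" for j
  proof -
    have "ip m rc (c j) = ip m (c K) (c j) - (\<Sum>s<K. cnj (\<gamma> s) * ip m (w s) (c j))"
      unfolding rc_eq ip_diff_left ip_sum_left by simp
    also have "\<dots> = ip N (d K) (d j) - (\<Sum>s<K. cnj (\<gamma> s) * ip N (u s) (d j))"
      using G Kn that I3 by simp
    also have "\<dots> = ip N rd (d j)"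
      unfolding rd_eq ip_diff_left ip_sum_left by simp
    finally show ?thesis .
  qed
  have F4a: "ip m rc rc = ip m rc (c K)"
  proof -
    have "ip m rc rc = ip m rc (c K) - (\<Sum>s<K. \<gamma> s * ip m rc (w s))"
      by (subst (2) rc_eq) (simp only: ip_diff_right ip_sum_right)
    also have "(\<Sum>s<K. \<gamma> s * ip m rc (w s)) = 0"
      using F1 by (simp add: ip_swap[of m rc])
    finally show ?thesis by simp
  qed
  have F4b: "ip N rd rd = ip N rd (d K)"
  proof -
    have "ip N rd rd = ip N rd (d K) - (\<Sum>s<K. \<gamma> s * ip N rd (u s))"
      by (subst (2) rd_eq) (simp only: ip_diff_right ip_sum_right)
    also have "(\<Sum>s<K. \<gamma> s * ip N rd (u s)) = 0"
      using F1 F2 by (simp add: ip_swap[of N rd])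
    finally show ?thesis by simp
  qed
  have F4: "ip m rc rc = ip N rd rd" using F4a F4b F3[OF Kn] by simp
  have F5: "ip m rc (c k) = 0" if k: "k < K" for k
  proof -
    have "ip m rc (c k) = ip m rc (\<lambda>a. \<Sum>s<K. ip m (w s) (c k) * w s a)"
      by (rule ip_cong) (use I5 k in auto)
    also have "\<dots> = (\<Sum>s<K. ip m (w s) (c k) * ip m rc (w s))"
      by (rule ip_sum_right)
    also have "\<dots> = 0" using F1 by (simp add: ip_swap[of m rc])
    finally show ?thesis .
  qed
  have nu2: "ip m rc rc = nu * nu"
    unfolding nu_def ip_self using nrm2_nonneg[of m rc]
    by (simp flip: of_real_mult)
  have cnu: "cnj nu = nu" unfolding nu_def by simp
  have nn: "nu * nu / (nu * nu) = 0 \<or> nu * nu / (nu * nu) = 1" by auto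
  show ?case
  proof (rule exI[of _ w'], rule exI[of _ u'], intro conjI allI impI)
    fix s t assume s: "s < Suc K" and t: "t < Suc K"
    show "ip m (w' s) (w' t) = ip N (u' s) (u' t)"
    proof (cases "s = K")
      case True
      then show ?thesis
      proof (cases "t = K")
        case True
        with \<open>s = K\<close> show ?thesis by (simp add: w'_def u'_def ip_div_left ip_div_right F4)
      next
        case False
        with t have "t < K" by simp
        with \<open>s = K\<close> False show ?thesis
          using F2[of t] by (simp add: w'_def u'_def ip_div_left ip_div_right ip_swap[of m rc] ip_swap[of N rd])
      qed
    next
      case False
      with s have "s < K" by simp
      then show ?thesis
      proof (cases "t = K")
        case True
        with \<open>s < K\<close> show ?thesis
          using F2[of s] by (simp add: w'_def u'_def ip_div_left ip_div_right)
      next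
        case False
        with t have "t < K" by simp
        with \<open>s < K\<close> show ?thesis using I1 by (simp add: w'_def u'_def)
      qed
    qed
  next
    fix s t assume s: "s < Suc K" and t: "t < Suc K" and st: "s \<noteq> t"
    show "ip m (w' s) (w' t) = 0"
    proof (cases "s = K")
      case True
      with st t have "t < K" by simp
      with True st show ?thesis using F1[of t]
        by (simp add: w'_def ip_div_left ip_swap[of m rc])
    next
      case False
      with s have "s < K" by simp
      show ?thesis
      proof (cases "t = K")
        case True
        with \<open>s < K\<close> show ?thesis using F1[of s] by (simp add: w'_def ip_div_right)
      next
        case False
        with t \<open>s < K\<close> st show ?thesis using I2 by (simp add: w'_def)
      qed
    qed
  next
    fix s assume s: "s < Suc K"
    show "ip m (w' s) (w' s) = 0 \<or> ip m (w' s) (w' s) = 1"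
    proof (cases "s = K")
      case True
      then show ?thesis using nn by (simp add: w'_def ip_div_left ip_div_right cnu nu2)
    next
      case False
      with s I2' show ?thesis by (simp add: w'_def)
    qed
  next
    fix s j assume s: "s < Suc K" and j: "j < n"
    show "ip m (w' s) (c j) = ip N (u' s) (d j)"
    proof (cases "s = K")
      case True
      then show ?thesis using F3[OF j] by (simp add: w'_def u'_def ip_div_left)
    next
      case False
      with s I3 j show ?thesis by (simp add: w'_def u'_def)
    qed
  next
    fix k a assume k: "k < Suc K" and a: "a < m"
    have split: "(\<Sum>s<Suc K. ip m (w' s) (c k) * w' s a) =
        (\<Sum>s<K. ip m (w s) (c k) * w s a) + ip m (\<lambda>a. rc a / nu) (c k) * (rc a / nu)"
      by (simp add: w'_def)
    show "c k a = (\<Sum>s<Suc K. ip m (w' s) (c k) * w' s a)"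
    proof (cases "k = K")
      case False
      with k have "k < K" by simp
      then show ?thesis unfolding split using I5 a F5 by (simp add: ip_div_left)
    next
      case True
      have "ip m (\<lambda>a. rc a / nu) (c k) * (rc a / nu) = rc a"
      proof (cases "nu = 0")
        case True
        then have "nrm2 m rc = 0" unfolding nu_def by simp
        then have "rc a = 0" using nrm2_zero a by blast
        then show ?thesis by simp
      next
        case False
        have e: "ip m rc (c K) = nu * nu" using F4a nu2 by simp
        show ?thesis using False True by (simp add: ip_div_left cnu e)
      qed
      then show ?thesis unfolding split using True by (simp add: rc_def \<gamma>_def)
    qed
  qed
qed

lemma bessel:
  fixes K :: nat
  assumes orth: "\<forall>s<K. \<forall>t<K. s \<noteq> t \<longrightarrow> ip m (w s) (w t) = 0"
    and nrm: "\<forall>s<K. ip m (w s) (w s) = 0 \<or> ip m (w s) (w s) = 1"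
  shows "ip m (\<lambda>a. \<Sum>s<K. ip m (w s) z * w s a) (\<lambda>a. \<Sum>s<K. ip m (w s) z * w s a)
         = complex_of_real (\<Sum>s<K. (cmod (ip m (w s) z))\<^sup>2)"
    and "(\<Sum>s<K. (cmod (ip m (w s) z))\<^sup>2) \<le> nrm2 m z"
proof -
  define g where "g s = ip m (w s) z" for s
  define P where "P a = (\<Sum>s<K. g s * w s a)" for a
  have P_eq: "P = (\<lambda>a. \<Sum>s<K. g s * w s a)" using P_def by auto
  have gw: "g s * ip m (w s) (w s) = g s" if "s < K" for s
  proof (cases "ip m (w s) (w s) = 1")
    case False
    then have "ip m (w s) (w s) = 0" using nrm that by auto
    then have "nrm2 m (w s) = 0" by (simp add: ip_self)
    then have "g s = 0" unfolding g_def by (intro ip_zero_left) (auto dest: nrm2_zero)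
    then show ?thesis by simp
  qed simp
  have Pw: "ip m (w s) P = g s" if "s < K" for s
  proof -
    have "ip m (w s) P = (\<Sum>t<K. g t * ip m (w s) (w t))"
      unfolding P_eq ip_sum_right by simp
    also have "\<dots> = g s * ip m (w s) (w s)"
      using that orth by (intro sum_single_nz) auto
    finally show ?thesis using gw that by simp
  qed
  have PP: "ip m P P = complex_of_real (\<Sum>s<K. (cmod (g s))\<^sup>2)"
  proof -
    have "ip m P P = (\<Sum>s<K. cnj (g s) * ip m (w s) P)"
      by (subst (1) P_eq) (simp only: ip_sum_left)
    also have "\<dots> = (\<Sum>s<K. cnj (g s) * g s)" using Pw by simp
    finally show ?thesis by (simp add: cnj_mult_self)
  qed
  have Pz: "ip m P z = complex_of_real (\<Sum>s<K. (cmod (g s))\<^sup>2)"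
  proof -
    have "ip m P z = (\<Sum>s<K. cnj (g s) * g s)"
      unfolding P_eq ip_sum_left g_def by simp
    then show ?thesis by (simp add: cnj_mult_self)
  qed
  show "ip m (\<lambda>a. \<Sum>s<K. ip m (w s) z * w s a) (\<lambda>a. \<Sum>s<K. ip m (w s) z * w s a)
         = complex_of_real (\<Sum>s<K. (cmod (ip m (w s) z))\<^sup>2)"
    using PP unfolding P_eq g_def .
  have e: "complex_of_real (nrm2 m (\<lambda>a. z a - P a)) = ip m z z - cnj (ip m P z) - ip m P z + ip m P P"
    unfolding ip_self[symmetric] ip_diff_left ip_diff_right ip_swap[of m z P] by simp
  have "0 \<le> nrm2 m (\<lambda>a. z a - P a)" by (rule nrm2_nonneg)
  then have "0 \<le> Re (ip m z z - cnj (ip m P z) - ip m P z + ip m P P)"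
    using e by (metis Re_complex_of_real)
  moreover have "nrm2 m P = (\<Sum>s<K. (cmod (g s))\<^sup>2)"
    using PP unfolding ip_self of_real_eq_iff .
  moreover have "Re (ip m P z) = (\<Sum>s<K. (cmod (g s))\<^sup>2)"
    using Pz by simp
  moreover have "Re (ip m z z) = nrm2 m z" by (simp add: ip_self)
  ultimately show "(\<Sum>s<K. (cmod (ip m (w s) z))\<^sup>2) \<le> nrm2 m z"
    using PP by (simp add: g_def)
qed

lemma decoder:
  fixes c d :: "nat \<Rightarrow> nat \<Rightarrow> complex"
  assumes G: "\<forall>j<n. \<forall>k<n. ip m (c j) (c k) = ip N (d j) (d k)"
  shows "\<exists>V. (\<forall>k<n. \<forall>a<m. (\<Sum>i<N. V a i * d k i) = c k a) \<and>
             (\<forall>z. (\<Sum>i<N. (cmod (\<Sum>a<m. cnj (V a i) * z a))\<^sup>2) \<le> nrm2 m z)"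
proof -
  obtain w u where
    I1: "\<forall>s<n. \<forall>t<n. ip m (w s) (w t) = ip N (u s) (u t)" and
    I2: "\<forall>s<n. \<forall>t<n. s \<noteq> t \<longrightarrow> ip m (w s) (w t) = 0" and
    I2': "\<forall>s<n. ip m (w s) (w s) = 0 \<or> ip m (w s) (w s) = 1" and
    I3: "\<forall>s<n. \<forall>j<n. ip m (w s) (c j) = ip N (u s) (d j)" and
    I5: "\<forall>k<n. \<forall>a<m. c k a = (\<Sum>s<n. ip m (w s) (c k) * w s a)"
    using gs_step[OF G, of n] by auto
  define V where "V a i = (\<Sum>s<n. w s a * cnj (u s i))" for a i
  show ?thesis
  proof (intro exI[of _ V] conjI allI impI)
    fix k a assume k: "k < n" and a: "a < m"
    have "(\<Sum>i<N. V a i * d k i) = (\<Sum>s<n. w s a * ip N (u s) (d k))"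
      unfolding V_def ip_def by (simp add: sum_distrib_left sum_distrib_right mult.assoc sum.swap[of _ "{..<N}"])
    also have "\<dots> = (\<Sum>s<n. ip m (w s) (c k) * w s a)"
      using I3 k by (simp add: mult.commute)
    also have "\<dots> = c k a" using I5 k a by simp
    finally show "(\<Sum>i<N. V a i * d k i) = c k a" .
  next
    fix z
    define g where "g s = ip m (w s) z" for s
    have yi: "(\<Sum>a<m. cnj (V a i) * z a) = (\<Sum>s<n. g s * u s i)" for i
      unfolding V_def g_def ip_def
      by (simp add: sum_distrib_left sum_distrib_right ac_simps) (rule sum.swap)
    define y where "y i = (\<Sum>s<n. g s * u s i)" for i
    have y_eq: "y = (\<lambda>i. \<Sum>s<n. g s * u s i)" using y_def by auto
    define P where "P a = (\<Sum>s<n. g s * w s a)" for a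
    have P_eq: "P = (\<lambda>a. \<Sum>s<n. g s * w s a)" using P_def by auto
    have "ip N y y = (\<Sum>s<n. cnj (g s) * (\<Sum>t<n. g t * ip N (u s) (u t)))"
      unfolding y_eq ip_sum_left ip_sum_right by simp
    also have "\<dots> = (\<Sum>s<n. cnj (g s) * (\<Sum>t<n. g t * ip m (w s) (w t)))"
      using I1 by simp
    also have "\<dots> = ip m P P"
      unfolding P_eq ip_sum_left ip_sum_right by simp
    also have "\<dots> = complex_of_real (\<Sum>s<n. (cmod (g s))\<^sup>2)"
      using bessel(1)[OF I2 I2', of z] unfolding P_eq g_def .
    finally have "nrm2 N y = (\<Sum>s<n. (cmod (g s))\<^sup>2)"
      unfolding ip_self of_real_eq_iff .
    also have "\<dots> \<le> nrm2 m z"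
      using bessel(2)[OF I2 I2', of z] unfolding g_def .
    finally show "(\<Sum>i<N. (cmod (\<Sum>a<m. cnj (V a i) * z a))\<^sup>2) \<le> nrm2 m z"
      unfolding yi nrm2_def y_def .
  qed
qed

lemma qform_add: "qform m (\<lambda>a b. E a b + F a b) x = qform m E x + qform m F x"
  unfolding qform_def by (simp add: algebra_simps sum.distrib)

lemma qform_diff: "qform m (\<lambda>a b. E a b - F a b) x = qform m E x - qform m F x"
  unfolding qform_def by (simp add: algebra_simps sum_subtractf)

lemma qform_scale: "qform m (\<lambda>a b. c * E a b) x = c * qform m E x"
  unfolding qform_def by (simp add: sum_distrib_left ac_simps)

lemma sum_swap3: "(\<Sum>a\<in>A. \<Sum>k\<in>K. \<Sum>i\<in>I. f a k i) = (\<Sum>i\<in>I. \<Sum>a\<in>A. \<Sum>k\<in>K. f a k i)"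
proof -
  have "(\<Sum>a\<in>A. \<Sum>k\<in>K. \<Sum>i\<in>I. f a k i) = (\<Sum>a\<in>A. \<Sum>i\<in>I. \<Sum>k\<in>K. f a k i)"
    by (intro sum.cong refl) (rule sum.swap)
  also have "\<dots> = (\<Sum>i\<in>I. \<Sum>a\<in>A. \<Sum>k\<in>K. f a k i)"
    by (rule sum.swap)
  finally show ?thesis .
qed

lemma qform_sum: "qform m (\<lambda>a b. \<Sum>j\<in>J. E j a b) x = (\<Sum>j\<in>J. qform m (E j) x)"
proof -
  have "qform m (\<lambda>a b. \<Sum>j\<in>J. E j a b) x = (\<Sum>a<m. \<Sum>b<m. \<Sum>j\<in>J. cnj (x a) * E j a b * x b)"
    unfolding qform_def by (simp add: sum_distrib_left sum_distrib_right)
  also have "\<dots> = (\<Sum>j\<in>J. \<Sum>a<m. \<Sum>b<m. cnj (x a) * E j a b * x b)"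
    by (rule sum_swap3)
  finally show ?thesis unfolding qform_def .
qed

lemma qform_rank1: "qform m (\<lambda>a b. g a * cnj (g b)) x = cnj (\<Sum>a<m. cnj (g a) * x a) * (\<Sum>a<m. cnj (g a) * x a)"
  unfolding qform_def cnj_sum sum_product by (intro sum.cong refl) (simp add: ac_simps)

lemma qform_id: "qform m (\<lambda>a b. if a = b then 1 else 0) x = complex_of_real (nrm2 m x)"
proof -
  have "(\<Sum>b<m. cnj (x a) * (if a = b then 1 else 0) * x b) = cnj (x a) * x a" if "a < m" for a
    using that by (subst sum_single_nz[where s = a]) auto
  then have "qform m (\<lambda>a b. if a = b then 1 else 0) x = (\<Sum>a<m. cnj (x a) * x a)"
    unfolding qform_def by simp
  then show ?thesis unfolding nrm2_def by (simp add: cnj_mult_self)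
qed

lemma qform_zero: "qform m (\<lambda>a b. 0) x = 0"
  unfolding qform_def by simp

definition hV :: "nat \<Rightarrow> (nat \<Rightarrow> nat \<Rightarrow> complex) \<Rightarrow> nat \<Rightarrow> (nat \<Rightarrow> complex) \<Rightarrow> complex" where
  "hV m V i x = (\<Sum>a<m. cnj (V a i) * x a)"

definition Fd :: "nat \<Rightarrow> nat \<Rightarrow> (nat \<Rightarrow> nat \<Rightarrow> complex) \<Rightarrow> nat \<Rightarrow> nat \<Rightarrow> nat \<Rightarrow> complex" where
  "Fd m N V i a a' = V a i * cnj (V a' i) +
     (if i = 0 then (if a = a' then 1 else 0) - (\<Sum>j<N. V a j * cnj (V a' j)) else 0)"

lemma qform_Fd:
  "qform m (Fd m N V i) x = complex_of_real ((cmod (hV m V i x))\<^sup>2 +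
      (if i = 0 then nrm2 m x - (\<Sum>j<N. (cmod (hV m V j x))\<^sup>2) else 0))"
proof -
  have r1: "qform m (\<lambda>a b. V a j * cnj (V b j)) x = complex_of_real ((cmod (hV m V j x))\<^sup>2)" for j
    by (simp only: hV_def qform_rank1[where g = "\<lambda>a. V a j"] cnj_mult_self)
  show ?thesis
  proof (cases "i = 0")
    case True
    have "Fd m N V i = (\<lambda>a b. V a i * cnj (V b i) + ((if a = b then 1 else 0) - (\<Sum>j<N. V a j * cnj (V b j))))"
      unfolding Fd_def using True by (intro ext) simp
    then show ?thesis using True
      by (simp only: qform_add qform_diff qform_sum qform_id r1) simp
  next
    case False
    have "Fd m N V i = (\<lambda>a b. V a i * cnj (V b i))"
      unfolding Fd_def using False by (intro ext) simp
    then show ?thesis using False by (simp add: r1)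
  qed
qed

lemma psd_Fd:
  assumes D3: "\<forall>z. (\<Sum>i<N. (cmod (hV m V i z))\<^sup>2) \<le> nrm2 m z"
  shows "psd m (Fd m N V i)"
  unfolding psd_def qform_Fd using D3 by (simp add: Reals_of_real)

lemma sum_Fd:
  assumes "0 < N"
  shows "(\<Sum>i<N. Fd m N V i a a') = (if a = a' then 1 else 0)"
proof -
  have "(\<Sum>i<N. Fd m N V i a a') = (\<Sum>i<N. V a i * cnj (V a' i)) +
      (\<Sum>i<N. (if i = 0 then (if a = a' then 1 else 0) - (\<Sum>j<N. V a j * cnj (V a' j)) else 0))"
    unfolding Fd_def by (simp add: sum.distrib)
  also have "(\<Sum>i<N. (if i = 0 then (if a = a' then 1 else 0) - (\<Sum>j<N. V a j * cnj (V a' j)) else (0::complex)))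
     = (if a = a' then 1 else 0) - (\<Sum>j<N. V a j * cnj (V a' j))"
    using assms by (simp add: sum.delta)
  finally show ?thesis by simp
qed

lemma sum_qform_Fd:
  assumes "0 < N"
  shows "(\<Sum>i<N. qform m (Fd m N V i) x) = complex_of_real (nrm2 m x)"
proof -
  have "(\<Sum>i<N. qform m (Fd m N V i) x) = qform m (\<lambda>a b. \<Sum>i<N. Fd m N V i a b) x"
    by (simp add: qform_sum)
  also have "\<dots> = qform m (\<lambda>a b. if a = b then 1 else 0) x"
    using sum_Fd[OF assms] by simp
  finally show ?thesis by (simp add: qform_id)
qed

lemma pass_bound:
  fixes p :: "nat \<Rightarrow> real" and v :: "nat \<Rightarrow> nat \<Rightarrow> complex"
  assumes D2: "\<forall>k<n. \<forall>a<m. (\<Sum>i<N. V a i * (complex_of_real (sqrt (p i)) * v i k)) = \<phi> a k"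
    and D3: "\<forall>z. (\<Sum>i<N. (cmod (hV m V i z))\<^sup>2) \<le> nrm2 m z"
    and p0: "\<forall>i<N. p i \<ge> 0" and p1: "(\<Sum>i<N. p i) = 1"
  shows "(cmod (bi_inner m n \<phi> \<chi>))\<^sup>2 \<le>
      (\<Sum>i<N. Re (qform m (Fd m N V i) (\<lambda>a. \<Sum>k<n. cnj (v i k) * \<chi> a k)))"
proof -
  define h where "h i = hV m V i (\<lambda>a. \<Sum>k<n. cnj (v i k) * \<chi> a k)" for i
  have each: "(cmod (h i))\<^sup>2 \<le> Re (qform m (Fd m N V i) (\<lambda>a. \<Sum>k<n. cnj (v i k) * \<chi> a k))" for i
    unfolding qform_Fd h_def using D3 by auto
  have eq: "bi_inner m n \<phi> \<chi> = (\<Sum>i<N. cnj (complex_of_real (sqrt (p i))) * h i)"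
  proof -
    have "bi_inner m n \<phi> \<chi> = (\<Sum>a<m. \<Sum>k<n. cnj (\<Sum>i<N. V a i * (complex_of_real (sqrt (p i)) * v i k)) * \<chi> a k)"
      unfolding bi_inner_def using D2 by simp
    also have "\<dots> = (\<Sum>i<N. cnj (complex_of_real (sqrt (p i))) * h i)"
    proof -
      have "(\<Sum>a<m. \<Sum>k<n. cnj (\<Sum>i<N. V a i * (complex_of_real (sqrt (p i)) * v i k)) * \<chi> a k)
          = (\<Sum>a<m. \<Sum>k<n. \<Sum>i<N. cnj (complex_of_real (sqrt (p i))) * (cnj (V a i) * (cnj (v i k) * \<chi> a k)))"
        by (simp add: cnj_sum sum_distrib_right sum_distrib_left ac_simps)
      also have "\<dots> = (\<Sum>i<N. \<Sum>a<m. \<Sum>k<n. cnj (complex_of_real (sqrt (p i))) * (cnj (V a i) * (cnj (v i k) * \<chi> a k)))"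
        by (rule sum_swap3)
      also have "\<dots> = (\<Sum>i<N. cnj (complex_of_real (sqrt (p i))) * h i)"
        unfolding h_def hV_def by (simp add: sum_distrib_left)
      finally show ?thesis .
    qed
    finally show ?thesis .
  qed
  have "(cmod (bi_inner m n \<phi> \<chi>))\<^sup>2 \<le> (\<Sum>i<N. (cmod (complex_of_real (sqrt (p i))))\<^sup>2) * (\<Sum>i<N. (cmod (h i))\<^sup>2)"
    unfolding eq by (rule complex_CS)
  also have "(\<Sum>i<N. (cmod (complex_of_real (sqrt (p i))))\<^sup>2) = 1"
  proof -
    have "(\<Sum>i<N. (cmod (complex_of_real (sqrt (p i))))\<^sup>2) = (\<Sum>i<N. p i)"
      by (rule sum.cong) (use p0 in auto)
    then show ?thesis using p1 by simp
  qed
  also have "1 * (\<Sum>i<N. (cmod (h i))\<^sup>2) \<le> (\<Sum>i<N. Re (qform m (Fd m N V i) (\<lambda>a. \<Sum>k<n. cnj (v i k) * \<chi> a k)))"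
    using each by (simp add: sum_mono)
  finally show ?thesis .
qed

lemma md_simps[simp]: "Suc (2*a) mod 2 = 1" "Suc (a*2) mod 2 = 1" "Suc (2*a) div 2 = a" "Suc (a*2) div 2 = a"
  "(2*a+1) mod 2 = 1" "(2*a+1) div 2 = a" for a :: nat
  by presburger+

lemma sum_split2: "(\<Sum>a'<2*m. g a') = (\<Sum>a<m. g (2*a) + g (2*a+1))" for m :: nat
  by (induction m) (simp_all add: sum.distrib ac_simps)

definition tens :: "(nat \<Rightarrow> real) \<Rightarrow> (nat \<Rightarrow> nat \<Rightarrow> complex) \<Rightarrow> nat \<Rightarrow> nat \<Rightarrow> complex" where
  "tens g F a' a'' = complex_of_real (g (a' mod 2)) * complex_of_real (g (a'' mod 2)) * F (a' div 2) (a'' div 2)"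

lemma qform_tens:
  "qform (2*m) (tens g F) x = qform m F (\<lambda>a. complex_of_real (g 0) * x (2*a) + complex_of_real (g 1) * x (2*a+1))"
proof -
  have "qform (2*m) (tens g F) x = (\<Sum>a<m. \<Sum>b<m.
      cnj (x (2*a)) * tens g F (2*a) (2*b) * x (2*b) + cnj (x (2*a)) * tens g F (2*a) (2*b+1) * x (2*b+1) +
      (cnj (x (2*a+1)) * tens g F (2*a+1) (2*b) * x (2*b) + cnj (x (2*a+1)) * tens g F (2*a+1) (2*b+1) * x (2*b+1)))"
    unfolding qform_def sum_split2 by (simp add: sum.distrib)
  also have "\<dots> = qform m F (\<lambda>a. complex_of_real (g 0) * x (2*a) + complex_of_real (g 1) * x (2*a+1))"
    unfolding qform_def tens_def
    by (intro sum.cong refl) (simp add: algebra_simps)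
  finally show ?thesis .
qed

lemma psd_tens: "psd m F \<Longrightarrow> psd (2*m) (tens g F)"
  unfolding psd_def qform_tens by blast

definition psiS :: "real \<Rightarrow> real \<Rightarrow> (nat \<Rightarrow> nat \<Rightarrow> complex) \<Rightarrow> (nat \<Rightarrow> nat \<Rightarrow> complex) \<Rightarrow> nat \<Rightarrow> nat \<Rightarrow> complex" where
  "psiS x y \<phi>0 \<phi>1 a' k = (if a' mod 2 = 0 then complex_of_real x * \<phi>0 (a' div 2) k else complex_of_real y * \<phi>1 (a' div 2) k)"

lemma psiS_simps[simp]: "psiS x y \<phi>0 \<phi>1 (2*a) k = complex_of_real x * \<phi>0 a k"
  "psiS x y \<phi>0 \<phi>1 (2*a+1) k = complex_of_real y * \<phi>1 a k"
  "psiS x y \<phi>0 \<phi>1 (a*2) k = complex_of_real x * \<phi>0 a k"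
  "psiS x y \<phi>0 \<phi>1 (Suc (2*a)) k = complex_of_real y * \<phi>1 a k"
  "psiS x y \<phi>0 \<phi>1 (Suc (a*2)) k = complex_of_real y * \<phi>1 a k"
  unfolding psiS_def by simp_all

definition chiS :: "(nat \<Rightarrow> real) \<Rightarrow> real \<Rightarrow> real \<Rightarrow> (nat \<Rightarrow> nat \<Rightarrow> complex) \<Rightarrow> (nat \<Rightarrow> nat \<Rightarrow> complex) \<Rightarrow> nat \<Rightarrow> nat \<Rightarrow> complex" where
  "chiS g x y \<phi>0 \<phi>1 a k = complex_of_real (g 0 * x) * \<phi>0 a k + complex_of_real (g 1 * y) * \<phi>1 a k"

definition EstS :: "nat \<Rightarrow> (nat \<Rightarrow> nat) \<Rightarrow> (nat \<Rightarrow> nat \<Rightarrow> complex) \<Rightarrow> (nat \<Rightarrow> nat \<Rightarrow> complex) \<Rightarrow> (nat \<Rightarrow> real) \<Rightarrow> (nat \<Rightarrow> real) \<Rightarrow> nat \<Rightarrow> nat \<Rightarrow> nat \<Rightarrow> nat \<Rightarrow> complex" where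
  "EstS m N V0 V1 g h b i = (if b = 0 then tens g (Fd m (N 0) V0 i) else tens h (Fd m (N 1) V1 i))"

lemma send_tens: "prob_send (2*m) n (psiS x y \<phi>0 \<phi>1) (tens g F) = Re (\<Sum>k<n. qform m F (\<lambda>a. chiS g x y \<phi>0 \<phi>1 a k))"
  unfolding prob_send_def qform_tens chiS_def by (simp add: mult.assoc)

lemma pass_tens: "prob_send_pass (2*m) n (psiS x y \<phi>0 \<phi>1) (tens g F) w =
    Re (qform m F (\<lambda>a. \<Sum>k<n. cnj (w k) * chiS g x y \<phi>0 \<phi>1 a k))"
proof -
  have "(\<lambda>a. complex_of_real (g 0) * (\<Sum>k<n. cnj (w k) * psiS x y \<phi>0 \<phi>1 (2 * a) k) +
                complex_of_real (g 1) * (\<Sum>k<n. cnj (w k) * psiS x y \<phi>0 \<phi>1 (2 * a + 1) k))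
      = (\<lambda>a. \<Sum>k<n. cnj (w k) * chiS g x y \<phi>0 \<phi>1 a k)"
    unfolding chiS_def by (simp add: sum_distrib_left sum.distrib algebra_simps)
  then show ?thesis unfolding prob_send_pass_def qform_tens by simp
qed

definition nn :: "nat \<Rightarrow> nat \<Rightarrow> (nat \<Rightarrow> nat \<Rightarrow> complex) \<Rightarrow> real" where
  "nn m n \<chi> = (\<Sum>k<n. nrm2 m (\<lambda>a. \<chi> a k))"

lemma bi_inner_self: "bi_inner m n \<chi> \<chi> = complex_of_real (nn m n \<chi>)"
  unfolding bi_inner_def nn_def nrm2_def
  by (simp add: cnj_mult_self sum.swap[of _ "{..<n}"])

lemma sum_send:
  assumes "0 < N"
  shows "(\<Sum>i<N. Re (\<Sum>k<n. qform m (Fd m N V i) (\<lambda>a. \<chi> a k))) = nn m n \<chi>"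
proof -
  have "(\<Sum>i<N. Re (\<Sum>k<n. qform m (Fd m N V i) (\<lambda>a. \<chi> a k))) = Re (\<Sum>k<n. \<Sum>i<N. qform m (Fd m N V i) (\<lambda>a. \<chi> a k))"
    by (simp add: sum.swap[of _ "{..<n}"])
  also have "\<dots> = Re (\<Sum>k<n. complex_of_real (nrm2 m (\<lambda>a. \<chi> a k)))"
    using sum_qform_Fd[OF assms] by simp
  finally show ?thesis unfolding nn_def by simp
qed

lemma bi_inner_lin_right: "bi_inner m n \<phi> (\<lambda>a k. A * u a k + B * w a k) = A * bi_inner m n \<phi> u + B * bi_inner m n \<phi> w"
  unfolding bi_inner_def by (simp add: algebra_simps sum.distrib sum_distrib_left)

lemma bi_inner_lin_left: "bi_inner m n (\<lambda>a k. A * u a k + B * w a k) \<psi> = cnj A * bi_inner m n u \<psi> + cnj B * bi_inner m n w \<psi>"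
  unfolding bi_inner_def by (simp add: algebra_simps sum.distrib sum_distrib_left)

lemma bi_inner_cnj: "cnj (bi_inner m n u w) = bi_inner m n w u"
  unfolding bi_inner_def by (simp add: mult.commute)

lemma mixture_N: "is_mixture n N p v \<Longrightarrow> 0 < N"
  unfolding is_mixture_def by (cases N) auto

lemma chi_algebra:
  assumes n00: "bi_inner m n \<phi>0 \<phi>0 = 1" and n11: "bi_inner m n \<phi>1 \<phi>1 = 1"
    and c01: "bi_inner m n \<phi>0 \<phi>1 = complex_of_real c"
  shows "nn m n (\<lambda>a k. complex_of_real A * \<phi>0 a k + complex_of_real B * \<phi>1 a k) = A\<^sup>2 + B\<^sup>2 + 2*A*B*c"
    and "bi_inner m n \<phi>0 (\<lambda>a k. complex_of_real A * \<phi>0 a k + complex_of_real B * \<phi>1 a k) = complex_of_real (A + B*c)"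
    and "bi_inner m n \<phi>1 (\<lambda>a k. complex_of_real A * \<phi>0 a k + complex_of_real B * \<phi>1 a k) = complex_of_real (A*c + B)"
proof -
  have c10: "bi_inner m n \<phi>1 \<phi>0 = complex_of_real c"
    using c01 bi_inner_cnj[of m n \<phi>0 \<phi>1] by simp
  show 2: "bi_inner m n \<phi>0 (\<lambda>a k. complex_of_real A * \<phi>0 a k + complex_of_real B * \<phi>1 a k) = complex_of_real (A + B*c)"
    unfolding bi_inner_lin_right n00 c01 by simp
  show 3: "bi_inner m n \<phi>1 (\<lambda>a k. complex_of_real A * \<phi>0 a k + complex_of_real B * \<phi>1 a k) = complex_of_real (A*c + B)"
    unfolding bi_inner_lin_right n11 c10 by simp
  have "complex_of_real (nn m n (\<lambda>a k. complex_of_real A * \<phi>0 a k + complex_of_real B * \<phi>1 a k))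
     = complex_of_real A * complex_of_real (A + B*c) + complex_of_real B * complex_of_real (A*c + B)"
    unfolding bi_inner_self[symmetric] bi_inner_lin_left 2 3 by simp
  then show "nn m n (\<lambda>a k. complex_of_real A * \<phi>0 a k + complex_of_real B * \<phi>1 a k) = A\<^sup>2 + B\<^sup>2 + 2*A*B*c"
    unfolding of_real_mult[symmetric] of_real_add[symmetric] of_real_eq_iff
    by (simp add: algebra_simps power2_eq_square)
qed

lemma sum_tens: "(\<Sum>i\<in>I. tens g (F i) a' a'') =
   complex_of_real (g (a' mod 2)) * complex_of_real (g (a'' mod 2)) * (\<Sum>i\<in>I. F i (a' div 2) (a'' div 2))"
  by (simp add: tens_def sum_distrib_left)

lemma eq_divmod2: "(a' = a'') \<longleftrightarrow> (a' div 2 = a'' div 2 \<and> a' mod 2 = a'' mod (2::nat))"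
  by (metis div_mult_mod_eq)

lemma chiS_eq: "chiS g x y \<phi>0 \<phi>1 = (\<lambda>a k. complex_of_real (g 0 * x) * \<phi>0 a k + complex_of_real (g 1 * y) * \<phi>1 a k)"
  unfolding chiS_def by (intro ext) simp

lemma strat_core:
  fixes p :: "nat \<Rightarrow> nat \<Rightarrow> real" and v :: "nat \<Rightarrow> nat \<Rightarrow> nat \<Rightarrow> complex"
  assumes D20: "\<forall>k<n. \<forall>a<m. (\<Sum>i<N 0. V0 a i * (complex_of_real (sqrt (p 0 i)) * v 0 i k)) = \<phi>0 a k"
    and D30: "\<forall>z. (\<Sum>i<N 0. (cmod (hV m V0 i z))\<^sup>2) \<le> nrm2 m z"
    and D21: "\<forall>k<n. \<forall>a<m. (\<Sum>i<N 1. V1 a i * (complex_of_real (sqrt (p 1 i)) * v 1 i k)) = \<phi>1 a k"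
    and D31: "\<forall>z. (\<Sum>i<N 1. (cmod (hV m V1 i z))\<^sup>2) \<le> nrm2 m z"
    and mix0: "is_mixture n (N 0) (p 0) (v 0)" and mix1: "is_mixture n (N 1) (p 1) (v 1)"
    and n00: "bi_inner m n \<phi>0 \<phi>0 = 1" and n11: "bi_inner m n \<phi>1 \<phi>1 = 1"
    and c01: "bi_inner m n \<phi>0 \<phi>1 = complex_of_real c"
    and g: "(g 0)\<^sup>2 + (g 1)\<^sup>2 = 1" and h0: "h 0 = - g 1" and h1: "h 1 = g 0"
  shows "reveal_povm (2*m) N (EstS m N V0 V1 g h)"
    and "prob_reveal0 (2*m) n N (psiS x y \<phi>0 \<phi>1) (EstS m N V0 V1 g h)
          = (g 0 * x)\<^sup>2 + (g 1 * y)\<^sup>2 + 2 * (g 0 * x) * (g 1 * y) * c"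
    and "prob_detect (2*m) n N v (psiS x y \<phi>0 \<phi>1) (EstS m N V0 V1 g h)
          \<le> (1 - c\<^sup>2) * ((g 1 * y)\<^sup>2 + (g 1 * x)\<^sup>2)"
proof -
  have N0: "0 < N 0" using mixture_N[OF mix0] .
  have N1: "0 < N 1" using mixture_N[OF mix1] .
  have p00: "\<forall>i<N 0. p 0 i \<ge> 0" and p01: "(\<Sum>i<N 0. p 0 i) = 1"
    using mix0 unfolding is_mixture_def by auto
  have p10: "\<forall>i<N 1. p 1 i \<ge> 0" and p11: "(\<Sum>i<N 1. p 1 i) = 1"
    using mix1 unfolding is_mixture_def by auto
  let ?E = "EstS m N V0 V1 g h" and ?\<psi> = "psiS x y \<phi>0 \<phi>1"
  have E0: "?E 0 i = tens g (Fd m (N 0) V0 i)" for i unfolding EstS_def by simp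
  have E1: "?E 1 i = tens h (Fd m (N 1) V1 i)" for i unfolding EstS_def by simp
  have two: "(\<Sum>b<2. f b) = f 0 + f (1::nat)" for f :: "nat \<Rightarrow> 'z::comm_monoid_add"
    by (simp add: numeral_2_eq_2)
  show "reveal_povm (2*m) N ?E"
    unfolding reveal_povm_def
  proof (intro conjI allI impI)
    fix b i assume b: "b < 2" and i: "i < N b"
    show "psd (2*m) (?E b i)"
    proof (cases "b = 0")
      case True
      then show ?thesis using psd_tens[OF psd_Fd[OF D30]] by (simp add: E0)
    next
      case False
      with b have "b = 1" by simp
      then show ?thesis using psd_tens[OF psd_Fd[OF D31]] by (simp add: EstS_def)
    qed
  next
    fix a' a'' assume "a' < 2*m" "a'' < 2*m"
    have gh: "g q * g r + h q * h r = (if q = r then 1 else 0)" if "q < 2" "r < 2" for q r :: nat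
    proof -
      have "q = 0 \<or> q = 1" "r = 0 \<or> r = 1" using that by auto
      then show ?thesis using g h0 h1 by (auto simp: power2_eq_square algebra_simps)
    qed
    have "(\<Sum>b<2. \<Sum>i<N b. ?E b i a' a'') = (\<Sum>i<N 0. tens g (Fd m (N 0) V0 i) a' a'') + (\<Sum>i<N 1. tens h (Fd m (N 1) V1 i) a' a'')"
      unfolding two E0 E1 by simp
    also have "\<dots> = complex_of_real (g (a' mod 2) * g (a'' mod 2) + h (a' mod 2) * h (a'' mod 2)) *
        (if a' div 2 = a'' div 2 then 1 else 0)"
      unfolding sum_tens sum_Fd[OF N0] sum_Fd[OF N1] by (simp add: algebra_simps)
    also have "\<dots> = (if a' = a'' then 1 else 0)"
      using gh[of "a' mod 2" "a'' mod 2"] eq_divmod2[of a' a''] by auto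
    finally show "(\<Sum>b<2. \<Sum>i<N b. ?E b i a' a'') = (if a' = a'' then 1 else 0)" .
  qed
  define A where "A = g 0 * x"
  define B where "B = g 1 * y"
  define A' where "A' = h 0 * x"
  define B' where "B' = h 1 * y"
  have chig: "chiS g x y \<phi>0 \<phi>1 = (\<lambda>a k. complex_of_real A * \<phi>0 a k + complex_of_real B * \<phi>1 a k)"
    unfolding chiS_eq A_def B_def ..
  have chih: "chiS h x y \<phi>0 \<phi>1 = (\<lambda>a k. complex_of_real A' * \<phi>0 a k + complex_of_real B' * \<phi>1 a k)"
    unfolding chiS_eq A'_def B'_def ..
  have send0: "(\<Sum>i<N 0. prob_send (2*m) n ?\<psi> (?E 0 i)) = A\<^sup>2 + B\<^sup>2 + 2*A*B*c"
    unfolding E0 send_tens sum_send[OF N0] chig chi_algebra(1)[OF n00 n11 c01] ..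
  have send1: "(\<Sum>i<N 1. prob_send (2*m) n ?\<psi> (?E 1 i)) = A'\<^sup>2 + B'\<^sup>2 + 2*A'*B'*c"
    unfolding E1 send_tens sum_send[OF N1] chih chi_algebra(1)[OF n00 n11 c01] ..
  show "prob_reveal0 (2*m) n N ?\<psi> ?E = (g 0 * x)\<^sup>2 + (g 1 * y)\<^sup>2 + 2 * (g 0 * x) * (g 1 * y) * c"
    unfolding prob_reveal0_def send0 A_def B_def ..
  have pass0: "(A + B*c)\<^sup>2 \<le> (\<Sum>i<N 0. prob_send_pass (2*m) n ?\<psi> (?E 0 i) (v 0 i))"
  proof -
    have e: "bi_inner m n \<phi>0 (chiS g x y \<phi>0 \<phi>1) = complex_of_real (A + B*c)"
      unfolding chig by (rule chi_algebra(2)[OF n00 n11 c01])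
    have "(A + B*c)\<^sup>2 = (cmod (bi_inner m n \<phi>0 (chiS g x y \<phi>0 \<phi>1)))\<^sup>2"
      unfolding e by (simp only: norm_of_real power2_abs)
    also have "\<dots> \<le> (\<Sum>i<N 0. Re (qform m (Fd m (N 0) V0 i) (\<lambda>a. \<Sum>k<n. cnj (v 0 i k) * chiS g x y \<phi>0 \<phi>1 a k)))"
      by (rule pass_bound[OF D20 D30 p00 p01])
    also have "\<dots> = (\<Sum>i<N 0. prob_send_pass (2*m) n ?\<psi> (?E 0 i) (v 0 i))"
      unfolding E0 pass_tens ..
    finally show ?thesis .
  qed
  have pass1: "(A'*c + B')\<^sup>2 \<le> (\<Sum>i<N 1. prob_send_pass (2*m) n ?\<psi> (?E 1 i) (v 1 i))"
  proof -
    have e: "bi_inner m n \<phi>1 (chiS h x y \<phi>0 \<phi>1) = complex_of_real (A'*c + B')"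
      unfolding chih by (rule chi_algebra(3)[OF n00 n11 c01])
    have "(A'*c + B')\<^sup>2 = (cmod (bi_inner m n \<phi>1 (chiS h x y \<phi>0 \<phi>1)))\<^sup>2"
      unfolding e by (simp only: norm_of_real power2_abs)
    also have "\<dots> \<le> (\<Sum>i<N 1. Re (qform m (Fd m (N 1) V1 i) (\<lambda>a. \<Sum>k<n. cnj (v 1 i k) * chiS h x y \<phi>0 \<phi>1 a k)))"
      by (rule pass_bound[OF D21 D31 p10 p11])
    also have "\<dots> = (\<Sum>i<N 1. prob_send_pass (2*m) n ?\<psi> (?E 1 i) (v 1 i))"
      unfolding E1 pass_tens ..
    finally show ?thesis .
  qed
  have "prob_detect (2*m) n N v ?\<psi> ?E =
     ((\<Sum>i<N 0. prob_send (2*m) n ?\<psi> (?E 0 i)) - (\<Sum>i<N 0. prob_send_pass (2*m) n ?\<psi> (?E 0 i) (v 0 i))) +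
     ((\<Sum>i<N 1. prob_send (2*m) n ?\<psi> (?E 1 i)) - (\<Sum>i<N 1. prob_send_pass (2*m) n ?\<psi> (?E 1 i) (v 1 i)))"
    unfolding prob_detect_def two by (simp add: sum_subtractf)
  also have "\<dots> \<le> (A\<^sup>2 + B\<^sup>2 + 2*A*B*c - (A + B*c)\<^sup>2) + (A'\<^sup>2 + B'\<^sup>2 + 2*A'*B'*c - (A'*c + B')\<^sup>2)"
    unfolding send0 send1 using pass0 pass1 by linarith
  also have "\<dots> = (1 - c\<^sup>2) * ((g 1 * y)\<^sup>2 + (g 1 * x)\<^sup>2)"
    unfolding A_def B_def A'_def B'_def h0 h1 by (simp add: algebra_simps power2_eq_square)
  finally show "prob_detect (2*m) n N v ?\<psi> ?E \<le> (1 - c\<^sup>2) * ((g 1 * y)\<^sup>2 + (g 1 * x)\<^sup>2)" .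
qed

lemma unit_psiS:
  assumes n00: "bi_inner m n \<phi>0 \<phi>0 = 1" and n11: "bi_inner m n \<phi>1 \<phi>1 = 1" and xy: "x\<^sup>2 + y\<^sup>2 = 1"
  shows "unit_bivec (2*m) n (psiS x y \<phi>0 \<phi>1)"
proof -
  have "complex_of_real (\<Sum>a<m. \<Sum>k<n. (cmod (\<phi>0 a k))\<^sup>2) = bi_inner m n \<phi>0 \<phi>0"
    unfolding bi_inner_def by (simp add: cnj_mult_self)
  then have b0: "(\<Sum>a<m. \<Sum>k<n. (cmod (\<phi>0 a k))\<^sup>2) = 1"
    by (metis n00 of_real_eq_1_iff)
  have "complex_of_real (\<Sum>a<m. \<Sum>k<n. (cmod (\<phi>1 a k))\<^sup>2) = bi_inner m n \<phi>1 \<phi>1"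
    unfolding bi_inner_def by (simp add: cnj_mult_self)
  then have b1: "(\<Sum>a<m. \<Sum>k<n. (cmod (\<phi>1 a k))\<^sup>2) = 1"
    by (metis n11 of_real_eq_1_iff)
  have "(\<Sum>a'<2*m. \<Sum>k<n. (cmod (psiS x y \<phi>0 \<phi>1 a' k))\<^sup>2)
      = x\<^sup>2 * (\<Sum>a<m. \<Sum>k<n. (cmod (\<phi>0 a k))\<^sup>2) + y\<^sup>2 * (\<Sum>a<m. \<Sum>k<n. (cmod (\<phi>1 a k))\<^sup>2)"
    unfolding sum_split2 by (simp add: norm_mult power_mult_distrib sum.distrib sum_distrib_left)
  then show ?thesis unfolding unit_bivec_def b0 b1 using xy by simp
qed

lemma bi_norm: "bi_inner m n \<phi> \<phi> = 1 \<Longrightarrow> (\<Sum>a<m. \<Sum>k<n. (cmod (\<phi> a k))\<^sup>2) = 1"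
proof -
  assume n: "bi_inner m n \<phi> \<phi> = 1"
  have "complex_of_real (\<Sum>a<m. \<Sum>k<n. (cmod (\<phi> a k))\<^sup>2) = bi_inner m n \<phi> \<phi>"
    unfolding bi_inner_def by (simp add: cnj_mult_self)
  then show ?thesis by (metis n of_real_eq_1_iff)
qed

lemma purif_norm:
  assumes P: "purification m n (mixture_dm N p v) \<phi>" and M: "is_mixture n N p v"
  shows "bi_inner m n \<phi> \<phi> = 1"
proof -
  have "bi_inner m n \<phi> \<phi> = (\<Sum>k<n. \<Sum>a<m. \<phi> a k * cnj (\<phi> a k))"
    unfolding bi_inner_def by (subst sum.swap) (simp add: mult.commute)
  also have "\<dots> = (\<Sum>k<n. mixture_dm N p v k k)"
    using P unfolding purification_def by simp
  also have "\<dots> = (\<Sum>i<N. complex_of_real (p i) * (\<Sum>k<n. v i k * cnj (v i k)))"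
    unfolding mixture_dm_def by (subst sum.swap) (simp add: sum_distrib_left mult.assoc)
  also have "\<dots> = (\<Sum>i<N. complex_of_real (p i))"
  proof (rule sum.cong[OF refl])
    fix i assume "i \<in> {..<N}"
    then have "unit_vec n (v i)" using M unfolding is_mixture_def by auto
    then have "(\<Sum>k<n. v i k * cnj (v i k)) = 1"
      unfolding unit_vec_def
      by (metis (no_types, lifting) complex_norm_square of_real_1 of_real_sum sum.cong)
    then show "complex_of_real (p i) * (\<Sum>k<n. v i k * cnj (v i k)) = complex_of_real (p i)" by simp
  qed
  also have "\<dots> = 1" using M unfolding is_mixture_def by (metis of_real_1 of_real_sum)
  finally show ?thesis .
qed

lemma bi_CS:
  assumes "bi_inner m n \<phi>0 \<phi>0 = 1" "bi_inner m n \<phi>1 \<phi>1 = 1"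
  shows "(cmod (bi_inner m n \<phi>0 \<phi>1))\<^sup>2 \<le> 1"
proof -
  have e: "bi_inner m n \<phi>0 \<phi>1 = (\<Sum>(a,k)\<in>{..<m}\<times>{..<n}. cnj (\<phi>0 a k) * \<phi>1 a k)"
    unfolding bi_inner_def by (simp add: sum.cartesian_product)
  have n0: "(\<Sum>(a,k)\<in>{..<m}\<times>{..<n}. (cmod (\<phi>0 a k))\<^sup>2) = 1"
    using bi_norm[OF assms(1)] by (simp add: sum.cartesian_product)
  have n1: "(\<Sum>(a,k)\<in>{..<m}\<times>{..<n}. (cmod (\<phi>1 a k))\<^sup>2) = 1"
    using bi_norm[OF assms(2)] by (simp add: sum.cartesian_product)
  have "(cmod (\<Sum>ak\<in>{..<m}\<times>{..<n}. cnj ((\<lambda>(a,k). \<phi>0 a k) ak) * (\<lambda>(a,k). \<phi>1 a k) ak))\<^sup>2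
     \<le> (\<Sum>ak\<in>{..<m}\<times>{..<n}. (cmod ((\<lambda>(a,k). \<phi>0 a k) ak))\<^sup>2) * (\<Sum>ak\<in>{..<m}\<times>{..<n}. (cmod ((\<lambda>(a,k). \<phi>1 a k) ak))\<^sup>2)"
    by (rule complex_CS)
  then show ?thesis unfolding e using n0 n1 by (simp add: case_prod_unfold)
qed

lemma phase:
  assumes P1: "purification m n \<rho>1 \<phi>1"
  shows "\<exists>\<phi>1'. purification m n \<rho>1 \<phi>1' \<and> bi_inner m n \<phi>0 \<phi>1' = complex_of_real (cmod (bi_inner m n \<phi>0 \<phi>1))
     \<and> bi_inner m n \<phi>1' \<phi>1' = bi_inner m n \<phi>1 \<phi>1"
proof -
  define z where "z = bi_inner m n \<phi>0 \<phi>1"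
  define w where "w = (if z = 0 then 1 else cnj z / complex_of_real (cmod z))"
  have ww: "w * cnj w = 1"
    unfolding w_def using complex_norm_square[of z]
    by (auto simp: field_simps power2_eq_square)
  have wz: "w * z = complex_of_real (cmod z)"
    unfolding w_def using complex_norm_square[of z]
    by (auto simp: field_simps power2_eq_square mult.commute)
  show ?thesis
  proof (intro exI[of _ "\<lambda>a k. w * \<phi>1 a k"] conjI)
    show "purification m n \<rho>1 (\<lambda>a k. w * \<phi>1 a k)"
      using P1 unfolding purification_def
    proof (intro allI impI)
      fix j k assume "\<forall>j<n. \<forall>k<n. (\<Sum>a<m. \<phi>1 a j * cnj (\<phi>1 a k)) = \<rho>1 j k" "j < n" "k < n"
      moreover have "(\<Sum>a<m. w * \<phi>1 a j * cnj (w * \<phi>1 a k)) = (w * cnj w) * (\<Sum>a<m. \<phi>1 a j * cnj (\<phi>1 a k))"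
        by (simp add: sum_distrib_left ac_simps)
      ultimately show "(\<Sum>a<m. w * \<phi>1 a j * cnj (w * \<phi>1 a k)) = \<rho>1 j k" using ww by simp
    qed
    show "bi_inner m n \<phi>0 (\<lambda>a k. w * \<phi>1 a k) = complex_of_real (cmod (bi_inner m n \<phi>0 \<phi>1))"
      unfolding bi_inner_def using wz unfolding z_def bi_inner_def
      by (simp add: sum_distrib_left ac_simps)
    show "bi_inner m n (\<lambda>a k. w * \<phi>1 a k) (\<lambda>a k. w * \<phi>1 a k) = bi_inner m n \<phi>1 \<phi>1"
    proof -
      have "bi_inner m n (\<lambda>a k. w * \<phi>1 a k) (\<lambda>a k. w * \<phi>1 a k) = (w * cnj w) * bi_inner m n \<phi>1 \<phi>1"
        unfolding bi_inner_def by (simp add: sum_distrib_left ac_simps)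
      then show ?thesis using ww by simp
    qed
  qed
qed

lemma honest_purif:
  assumes M: "is_mixture n N p v"
  shows "purification N n (mixture_dm N p v) (\<lambda>a k. complex_of_real (sqrt (p a)) * v a k)"
  unfolding purification_def mixture_dm_def
proof (intro allI impI sum.cong refl)
  fix j k a assume "a \<in> {..<N}"
  then have "p a \<ge> 0" using M unfolding is_mixture_def by auto
  then show "complex_of_real (sqrt (p a)) * v a j * cnj (complex_of_real (sqrt (p a)) * v a k) =
        complex_of_real (p a) * v a j * cnj (v a k)"
    by (simp add: ac_simps flip: of_real_mult)
qed

lemma pad_purif:
  assumes P: "purification m n \<rho> \<phi>" and mm: "m \<le> m'"
  shows "purification m' n \<rho> (\<lambda>a k. if a < m then \<phi> a k else 0)"
  unfolding purification_def
proof (intro allI impI)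
  fix j k assume jk: "j < n" "k < n"
  have "(\<Sum>a<m'. (if a < m then \<phi> a j else 0) * cnj (if a < m then \<phi> a k else 0))
      = (\<Sum>a<m'. if a < m then \<phi> a j * cnj (\<phi> a k) else 0)"
    by (intro sum.cong) auto
  also have "\<dots> = (\<Sum>a\<in>{x\<in>{..<m'}. x < m}. \<phi> a j * cnj (\<phi> a k))"
    by (rule sum.inter_filter[symmetric]) simp
  also have "{x\<in>{..<m'}. x < m} = {..<m}" using mm by auto
  finally show "(\<Sum>a<m'. (if a < m then \<phi> a j else 0) * cnj (if a < m then \<phi> a k else 0)) = \<rho> j k"
    using P jk unfolding purification_def by simp
qed

lemma purif_nonempty:
  assumes M0: "is_mixture n N0 p0 v0" and M1: "is_mixture n N1 p1 v1"
  shows "\<exists>m \<phi>0 \<phi>1. purification m n (mixture_dm N0 p0 v0) \<phi>0 \<and> purification m n (mixture_dm N1 p1 v1) \<phi>1"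
  using pad_purif[OF honest_purif[OF M0], of "N0 + N1"] pad_purif[OF honest_purif[OF M1], of "N0 + N1"]
  by auto

definition Sset :: "nat \<Rightarrow> (nat \<Rightarrow> nat \<Rightarrow> complex) \<Rightarrow> (nat \<Rightarrow> nat \<Rightarrow> complex) \<Rightarrow> real set" where
  "Sset n rho0 rho1 = {(cmod (bi_inner m n phi0 phi1))\<^sup>2 | m phi0 phi1.
      purification m n rho0 phi0 \<and> purification m n rho1 phi1}"

lemma fid_facts:
  assumes M0: "is_mixture n N0 p0 v0" and M1: "is_mixture n N1 p1 v1"
  defines "f \<equiv> fidelity n (mixture_dm N0 p0 v0) (mixture_dm N1 p1 v1)"
  shows "\<And>m \<phi>0 \<phi>1. purification m n (mixture_dm N0 p0 v0) \<phi>0 \<Longrightarrow> purification m n (mixture_dm N1 p1 v1) \<phi>1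
            \<Longrightarrow> (cmod (bi_inner m n \<phi>0 \<phi>1))\<^sup>2 \<le> f"
    and "f \<le> 1" and "0 \<le> f"
    and "\<And>e. e < f \<Longrightarrow> \<exists>m \<phi>0 \<phi>1. purification m n (mixture_dm N0 p0 v0) \<phi>0 \<and>
            purification m n (mixture_dm N1 p1 v1) \<phi>1 \<and> e < (cmod (bi_inner m n \<phi>0 \<phi>1))\<^sup>2"
proof -
  let ?S = "Sset n (mixture_dm N0 p0 v0) (mixture_dm N1 p1 v1)"
  have fS: "f = Sup ?S" unfolding f_def fidelity_def Sset_def ..
  have le1: "s \<le> 1" if "s \<in> ?S" for s
    using that unfolding Sset_def
    using bi_CS purif_norm[OF _ M0] purif_norm[OF _ M1] by blast
  have bdd: "bdd_above ?S" using le1 by (intro bdd_aboveI) auto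
  obtain m \<phi>0 \<phi>1 where "purification m n (mixture_dm N0 p0 v0) \<phi>0" "purification m n (mixture_dm N1 p1 v1) \<phi>1"
    using purif_nonempty[OF M0 M1] by blast
  then have mem: "(cmod (bi_inner m n \<phi>0 \<phi>1))\<^sup>2 \<in> ?S" unfolding Sset_def by blast
  then have ne: "?S \<noteq> {}" by blast
  show up: "(cmod (bi_inner m n \<phi>0 \<phi>1))\<^sup>2 \<le> f"
    if "purification m n (mixture_dm N0 p0 v0) \<phi>0" "purification m n (mixture_dm N1 p1 v1) \<phi>1" for m \<phi>0 \<phi>1
  proof -
    have "(cmod (bi_inner m n \<phi>0 \<phi>1))\<^sup>2 \<in> ?S" using that unfolding Sset_def by blast
    then show ?thesis unfolding fS using bdd by (rule cSup_upper)
  qed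
  show "f \<le> 1" unfolding fS using ne le1 by (rule cSup_least)
  show "0 \<le> f" using up[OF \<open>purification m n _ \<phi>0\<close> \<open>purification m n _ \<phi>1\<close>]
    by (meson order_trans zero_le_power2)
  show "\<exists>m \<phi>0 \<phi>1. purification m n (mixture_dm N0 p0 v0) \<phi>0 \<and>
            purification m n (mixture_dm N1 p1 v1) \<phi>1 \<and> e < (cmod (bi_inner m n \<phi>0 \<phi>1))\<^sup>2" if "e < f" for e
  proof -
    have "e < Sup ?S" using that fS by simp
    then obtain s where "s \<in> ?S" "e < s" using less_cSup_iff[OF ne bdd] by blast
    then show ?thesis unfolding Sset_def by blast
  qed
qed

lemma col_le: "k < n \<Longrightarrow> (\<Sum>a<m. (cmod (x a k))\<^sup>2) \<le> (\<Sum>a<m. \<Sum>k'<n. (cmod (x a k'))\<^sup>2)"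
  for k n m :: nat and x :: "nat \<Rightarrow> nat \<Rightarrow> complex"
  by (intro sum_mono member_le_sum) auto

lemma fid1:
  assumes M0: "is_mixture n N0 p0 v0" and M1: "is_mixture n N1 p1 v1"
    and f1: "fidelity n (mixture_dm N0 p0 v0) (mixture_dm N1 p1 v1) = 1"
    and jk: "j < n" "k < n"
  shows "mixture_dm N0 p0 v0 j k = mixture_dm N1 p1 v1 j k"
proof (rule ccontr)
  let ?r0 = "mixture_dm N0 p0 v0" and ?r1 = "mixture_dm N1 p1 v1"
  assume ne: "?r0 j k \<noteq> ?r1 j k"
  define d where "d = cmod (?r0 j k - ?r1 j k)"
  have d0: "d > 0" using ne unfolding d_def by simp
  have "1 - d\<^sup>2/16 < 1" using d0 by simp
  then obtain m \<phi>0 \<phi>1 where P0: "purification m n ?r0 \<phi>0" and P1: "purification m n ?r1 \<phi>1"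
     and big: "1 - d\<^sup>2/16 < (cmod (bi_inner m n \<phi>0 \<phi>1))\<^sup>2"
    using fid_facts(4)[OF M0 M1] f1 by metis
  define r where "r = cmod (bi_inner m n \<phi>0 \<phi>1)"
  obtain \<psi> where P1': "purification m n ?r1 \<psi>" and c01: "bi_inner m n \<phi>0 \<psi> = complex_of_real r"
    using phase[OF P1, of \<phi>0] unfolding r_def by blast
  have n00: "bi_inner m n \<phi>0 \<phi>0 = 1" by (rule purif_norm[OF P0 M0])
  have n11: "bi_inner m n \<psi> \<psi> = 1" by (rule purif_norm[OF P1' M1])
  have r1: "r\<^sup>2 \<le> 1" unfolding r_def using bi_CS[OF n00 purif_norm[OF P1 M1]] .
  have r0: "r \<ge> 0" unfolding r_def by simp
  have rle: "r \<le> 1" using r1 r0 by (simp add: power_le_one_iff)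
  have c10: "bi_inner m n \<psi> \<phi>0 = complex_of_real r"
    using c01 bi_inner_cnj[of m n \<phi>0 \<psi>] by simp
  define \<delta> where "\<delta> a k = 1 * \<phi>0 a k + (-1) * \<psi> a k" for a k
  have \<delta>eq: "\<delta> = (\<lambda>a k. 1 * \<phi>0 a k + (-1) * \<psi> a k)" unfolding \<delta>_def by auto
  have "bi_inner m n \<delta> \<delta> = complex_of_real (2 - 2*r)"
    unfolding \<delta>eq bi_inner_lin_left bi_inner_lin_right n00 n11 c01 c10 by simp
  then have nd: "(\<Sum>a<m. \<Sum>k<n. (cmod (\<delta> a k))\<^sup>2) = 2 - 2*r"
  proof -
    assume h: "bi_inner m n \<delta> \<delta> = complex_of_real (2 - 2*r)"
    have "complex_of_real (\<Sum>a<m. \<Sum>k<n. (cmod (\<delta> a k))\<^sup>2) = bi_inner m n \<delta> \<delta>"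
      unfolding bi_inner_def by (simp add: cnj_mult_self)
    then show ?thesis using h of_real_eq_iff by metis
  qed
  have n0: "(\<Sum>a<m. \<Sum>k<n. (cmod (\<phi>0 a k))\<^sup>2) = 1" by (rule bi_norm[OF n00])
  have n1: "(\<Sum>a<m. \<Sum>k<n. (cmod (\<psi> a k))\<^sup>2) = 1" by (rule bi_norm[OF n11])
  have split: "?r0 j k - ?r1 j k = (\<Sum>a<m. cnj (\<phi>0 a k) * \<delta> a j) + (\<Sum>a<m. cnj (\<delta> a k) * \<psi> a j)"
  proof -
    have "?r0 j k - ?r1 j k = (\<Sum>a<m. \<phi>0 a j * cnj (\<phi>0 a k)) - (\<Sum>a<m. \<psi> a j * cnj (\<psi> a k))"
      using P0 P1' jk unfolding purification_def by simp
    also have "\<dots> = (\<Sum>a<m. cnj (\<phi>0 a k) * \<delta> a j + cnj (\<delta> a k) * \<psi> a j)"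
      unfolding \<delta>_def by (simp add: sum_subtractf[symmetric] algebra_simps)
    finally show ?thesis by (simp add: sum.distrib)
  qed
  have b1: "cmod (\<Sum>a<m. cnj (\<phi>0 a k) * \<delta> a j) \<le> sqrt (2 - 2*r)"
  proof -
    have "cmod (\<Sum>a<m. cnj (\<phi>0 a k) * \<delta> a j) \<le> sqrt (\<Sum>a<m. (cmod (\<phi>0 a k))\<^sup>2) * sqrt (\<Sum>a<m. (cmod (\<delta> a j))\<^sup>2)"
      by (rule complex_CS')
    also have "\<dots> \<le> sqrt 1 * sqrt (2 - 2*r)"
      using col_le[OF jk(2), where m=m and x=\<phi>0] col_le[OF jk(1), where m=m and x=\<delta>] n0 nd
      by (intro mult_mono real_sqrt_le_mono) (auto simp: sum_nonneg)
    finally show ?thesis by simp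
  qed
  have b2: "cmod (\<Sum>a<m. cnj (\<delta> a k) * \<psi> a j) \<le> sqrt (2 - 2*r)"
  proof -
    have "cmod (\<Sum>a<m. cnj (\<delta> a k) * \<psi> a j) \<le> sqrt (\<Sum>a<m. (cmod (\<delta> a k))\<^sup>2) * sqrt (\<Sum>a<m. (cmod (\<psi> a j))\<^sup>2)"
      by (rule complex_CS')
    also have "\<dots> \<le> sqrt (2 - 2*r) * sqrt 1"
      using col_le[OF jk(2), where m=m and x=\<delta>] col_le[OF jk(1), where m=m and x=\<psi>] n1 nd rle
      by (intro mult_mono real_sqrt_le_mono) (auto simp: sum_nonneg)
    finally show ?thesis by simp
  qed
  have "d \<le> 2 * sqrt (2 - 2*r)"
    unfolding d_def split using norm_triangle_ineq[of "\<Sum>a<m. cnj (\<phi>0 a k) * \<delta> a j" "\<Sum>a<m. cnj (\<delta> a k) * \<psi> a j"] b1 b2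
    by linarith
  then have "d\<^sup>2 \<le> (2 * sqrt (2 - 2*r))\<^sup>2" using d0 by (intro power_mono) auto
  also have "\<dots> = 4 * (2 - 2*r)" using rle by (simp add: power_mult_distrib)
  finally have "d\<^sup>2 \<le> 8 - 8 * r" by simp
  moreover have "r\<^sup>2 \<le> r" using r0 rle unfolding power2_eq_square using mult_left_le_one_le[of r r] by simp
  moreover have "1 - d\<^sup>2/16 < r\<^sup>2" using big unfolding r_def .
  moreover have "d\<^sup>2 > 0" using d0 by simp
  ultimately show False by linarith
qed

definition mixE :: "real \<Rightarrow> (nat \<Rightarrow> nat \<Rightarrow> nat \<Rightarrow> nat \<Rightarrow> complex) \<Rightarrow> (nat \<Rightarrow> nat \<Rightarrow> nat \<Rightarrow> nat \<Rightarrow> complex) \<Rightarrow> nat \<Rightarrow> nat \<Rightarrow> nat \<Rightarrow> nat \<Rightarrow> complex" where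
  "mixE t E E' b i a a' = complex_of_real t * E b i a a' + complex_of_real (1 - t) * E' b i a a'"

lemma mixE_eq: "mixE t E E' b i = (\<lambda>a a'. complex_of_real t * E b i a a' + complex_of_real (1 - t) * E' b i a a')"
  unfolding mixE_def by (intro ext) simp

lemma qform_mix: "qform m (mixE t E E' b i) x = complex_of_real t * qform m (E b i) x + complex_of_real (1 - t) * qform m (E' b i) x"
  unfolding mixE_eq qform_add qform_scale ..

lemma mix_povm:
  assumes t: "0 \<le> t" "t \<le> 1" and R: "reveal_povm m N E" and R': "reveal_povm m N E'"
  shows "reveal_povm m N (mixE t E E')"
  unfolding reveal_povm_def
proof (intro conjI allI impI)
  fix b i assume bi: "b < 2" "i < N b"
  have p: "psd m (E b i)" "psd m (E' b i)" using R R' bi unfolding reveal_povm_def by auto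
  show "psd m (mixE t E E' b i)"
    unfolding psd_def qform_mix
  proof
    fix x
    obtain u u' where u: "qform m (E b i) x = complex_of_real u" "u \<ge> 0"
        and u': "qform m (E' b i) x = complex_of_real u'" "u' \<ge> 0"
      using p unfolding psd_def by (metis Reals_cases Re_complex_of_real)
    show "complex_of_real t * qform m (E b i) x + complex_of_real (1 - t) * qform m (E' b i) x \<in> \<real> \<and>
        0 \<le> Re (complex_of_real t * qform m (E b i) x + complex_of_real (1 - t) * qform m (E' b i) x)"
      unfolding u u' using t u u' by (simp flip: of_real_mult of_real_add)
  qed
next
  fix a a' assume aa: "a < m" "a' < m"
  have s: "(\<Sum>b<2. \<Sum>i<N b. E b i a a') = (if a = a' then 1 else 0)"
     "(\<Sum>b<2. \<Sum>i<N b. E' b i a a') = (if a = a' then 1 else 0)"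
    using R R' aa unfolding reveal_povm_def by auto
  have "(\<Sum>b<2. \<Sum>i<N b. mixE t E E' b i a a') =
      complex_of_real t * (\<Sum>b<2. \<Sum>i<N b. E b i a a') + complex_of_real (1 - t) * (\<Sum>b<2. \<Sum>i<N b. E' b i a a')"
    unfolding mixE_def by (simp add: sum.distrib sum_distrib_left)
  also have "\<dots> = (if a = a' then 1 else 0)" unfolding s by (simp flip: of_real_add)
  finally show "(\<Sum>b<2. \<Sum>i<N b. mixE t E E' b i a a') = (if a = a' then 1 else 0)" .
qed

lemma send_mix: "prob_send m n \<psi> (mixE t E E' b i) = t * prob_send m n \<psi> (E b i) + (1 - t) * prob_send m n \<psi> (E' b i)"
  unfolding prob_send_def qform_mix by (simp add: sum.distrib flip: sum_distrib_left)

lemma pass_mix: "prob_send_pass m n \<psi> (mixE t E E' b i) w = t * prob_send_pass m n \<psi> (E b i) w + (1 - t) * prob_send_pass m n \<psi> (E' b i) w"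
  unfolding prob_send_pass_def qform_mix by simp

lemma reveal0_mix: "prob_reveal0 m n N \<psi> (mixE t E E') = t * prob_reveal0 m n N \<psi> E + (1 - t) * prob_reveal0 m n N \<psi> E'"
  unfolding prob_reveal0_def send_mix by (simp add: sum.distrib sum_distrib_left)

lemma detect_mix: "prob_detect m n N v \<psi> (mixE t E E') = t * prob_detect m n N v \<psi> E + (1 - t) * prob_detect m n N v \<psi> E'"
  unfolding prob_detect_def send_mix pass_mix by (simp add: sum.distrib sum_distrib_left algebra_simps sum_subtractf)

lemma gram_ok:
  assumes P: "purification m n (mixture_dm N p v) \<phi>" and M: "is_mixture n N p v"
  shows "\<forall>j<n. \<forall>k<n. ip m (\<lambda>a. \<phi> a j) (\<lambda>a. \<phi> a k) =
     ip N (\<lambda>i. complex_of_real (sqrt (p i)) * v i j) (\<lambda>i. complex_of_real (sqrt (p i)) * v i k)"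
proof (intro allI impI)
  fix j k assume jk: "j < n" "k < n"
  have "ip m (\<lambda>a. \<phi> a j) (\<lambda>a. \<phi> a k) = cnj (\<Sum>a<m. \<phi> a j * cnj (\<phi> a k))"
    unfolding ip_def by (simp add: mult.commute)
  also have "\<dots> = cnj (mixture_dm N p v j k)" using P jk unfolding purification_def by simp
  also have "\<dots> = (\<Sum>i<N. complex_of_real (p i) * cnj (v i j) * v i k)"
    unfolding mixture_dm_def by (simp add: ac_simps)
  also have "\<dots> = ip N (\<lambda>i. complex_of_real (sqrt (p i)) * v i j) (\<lambda>i. complex_of_real (sqrt (p i)) * v i k)"
    unfolding ip_def
  proof (rule sum.cong[OF refl])
    fix i assume "i \<in> {..<N}"
    then have "p i \<ge> 0" using M unfolding is_mixture_def by auto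
    then show "complex_of_real (p i) * cnj (v i j) * v i k =
        cnj (complex_of_real (sqrt (p i)) * v i j) * (complex_of_real (sqrt (p i)) * v i k)"
      by (simp add: ac_simps flip: of_real_mult)
  qed
  finally show "ip m (\<lambda>a. \<phi> a j) (\<lambda>a. \<phi> a k) =
     ip N (\<lambda>i. complex_of_real (sqrt (p i)) * v i j) (\<lambda>i. complex_of_real (sqrt (p i)) * v i k)" .
qed

lemma decoder_purif:
  assumes P: "purification m n (mixture_dm N p v) \<phi>" and M: "is_mixture n N p v"
  shows "\<exists>V. (\<forall>k<n. \<forall>a<m. (\<Sum>i<N. V a i * (complex_of_real (sqrt (p i)) * v i k)) = \<phi> a k) \<and>
             (\<forall>z. (\<Sum>i<N. (cmod (hV m V i z))\<^sup>2) \<le> nrm2 m z)"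
  using decoder[OF gram_ok[OF P M]] unfolding hV_def by simp

lemma final_pair:
  fixes n :: nat and N :: "nat \<Rightarrow> nat" and p :: "nat \<Rightarrow> nat \<Rightarrow> real"
    and v :: "nat \<Rightarrow> nat \<Rightarrow> nat \<Rightarrow> complex" and \<alpha> f c t :: real
  assumes mix0: "is_mixture n (N 0) (p 0) (v 0)"
    and mix1: "is_mixture n (N 1) (p 1) (v 1)"
    and alpha: "0 \<le> \<alpha>" "\<alpha> \<le> pi / 4"
    and P0: "purification m n (mixture_dm (N 0) (p 0) (v 0)) \<phi>0"
    and P1: "purification m n (mixture_dm (N 1) (p 1) (v 1)) \<phi>1"
    and c01: "bi_inner m n \<phi>0 \<phi>1 = complex_of_real c" and c0: "0 \<le> c" and c1: "c \<le> 1"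
    and t0: "0 \<le> t" and t1: "t \<le> 1"
    and teq: "t * (c * sin (2*\<alpha>) / (2 * sqrt (c\<^sup>2 * (sin \<alpha>)\<^sup>2 + (cos \<alpha>)\<^sup>2))) = sqrt f * sin (2*\<alpha>) / 2"
    and det: "(1 - c\<^sup>2) * (sin (\<alpha>/2))\<^sup>2 \<le> (1 - f) * (sin \<alpha>)\<^sup>2 / 2"
  shows "\<exists>m psi E0 E1.
     unit_bivec m n psi \<and> reveal_povm m N E0 \<and> reveal_povm m N E1 \<and>
     prob_reveal0 m n N psi E1 = 1 / 2 \<and>
     prob_reveal0 m n N psi E0 - prob_reveal0 m n N psi E1 = sqrt f * sin (2 * \<alpha>) / 2 \<and>
     prob_detect m n N v psi E0 \<le> (1 - f) * (sin \<alpha>)\<^sup>2 / 2 \<and>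
     prob_detect m n N v psi E1 \<le> (1 - f) * (sin \<alpha>)\<^sup>2 / 2"
proof -
  obtain V0 where D20: "\<forall>k<n. \<forall>a<m. (\<Sum>i<N 0. V0 a i * (complex_of_real (sqrt (p 0 i)) * v 0 i k)) = \<phi>0 a k"
      and D30: "\<forall>z. (\<Sum>i<N 0. (cmod (hV m V0 i z))\<^sup>2) \<le> nrm2 m z"
    using decoder_purif[OF P0 mix0] by blast
  obtain V1 where D21: "\<forall>k<n. \<forall>a<m. (\<Sum>i<N 1. V1 a i * (complex_of_real (sqrt (p 1 i)) * v 1 i k)) = \<phi>1 a k"
      and D31: "\<forall>z. (\<Sum>i<N 1. (cmod (hV m V1 i z))\<^sup>2) \<le> nrm2 m z"
    using decoder_purif[OF P1 mix1] by blast
  have n00: "bi_inner m n \<phi>0 \<phi>0 = 1" by (rule purif_norm[OF P0 mix0])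
  have n11: "bi_inner m n \<phi>1 \<phi>1 = 1" by (rule purif_norm[OF P1 mix1])
  define C where "C = cos (\<alpha>/2)"
  define S where "S = sin (\<alpha>/2)"
  define K where "K = sqrt (c\<^sup>2 * (sin \<alpha>)\<^sup>2 + (cos \<alpha>)\<^sup>2)"
  define q where "q = c * sin \<alpha> / K"
  define x where "x = sqrt ((1 + q) / 2)"
  define y where "y = sqrt ((1 - q) / 2)"
  have pipos: "pi > 0" by (rule pi_gt_zero)
  have cpos: "cos \<alpha> > 0" using alpha pipos by (intro cos_gt_zero_pi) linarith+
  have spos: "sin \<alpha> \<ge> 0" using alpha pipos by (intro sin_ge_zero) linarith+
  have CS1: "C\<^sup>2 + S\<^sup>2 = 1" unfolding C_def S_def by (simp add: add.commute)
  have sinA: "sin \<alpha> = 2 * S * C" unfolding S_def C_def using sin_double[of "\<alpha>/2"] by simp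
  have cosA: "cos \<alpha> = C\<^sup>2 - S\<^sup>2" unfolding S_def C_def using cos_double[of "\<alpha>/2"] by simp
  have sin2A: "sin (2*\<alpha>) = 2 * sin \<alpha> * cos \<alpha>" by (rule sin_double)
  have K2: "K\<^sup>2 = c\<^sup>2 * (sin \<alpha>)\<^sup>2 + (cos \<alpha>)\<^sup>2" unfolding K_def by (simp add: add_nonneg_nonneg)
  have Kpos: "K > 0" unfolding K_def using cpos by (intro real_sqrt_gt_zero add_nonneg_pos) auto
  have csK: "c * sin \<alpha> \<le> K"
  proof -
    have "c * sin \<alpha> = sqrt ((c * sin \<alpha>)\<^sup>2)" using c0 spos by simp
    also have "\<dots> \<le> K" unfolding K_def by (intro real_sqrt_le_mono) (simp add: power_mult_distrib)
    finally show ?thesis .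
  qed
  have q0: "0 \<le> q" unfolding q_def using c0 spos Kpos by simp
  have q1: "q \<le> 1" unfolding q_def using csK Kpos by simp
  have x2: "x\<^sup>2 = (1 + q) / 2" unfolding x_def using q0 by simp
  have y2: "y\<^sup>2 = (1 - q) / 2" unfolding y_def using q1 by simp
  have x0: "x \<ge> 0" and y0: "y \<ge> 0" unfolding x_def y_def using q0 q1 by simp_all
  have xy1: "x\<^sup>2 + y\<^sup>2 = 1" unfolding x2 y2 by (simp add: field_simps)
  have xy: "x * y = cos \<alpha> / (2 * K)"
  proof -
    have "(x * y)\<^sup>2 = (1 - q\<^sup>2) / 4" unfolding power_mult_distrib x2 y2 by (simp add: field_simps power2_eq_square)
    also have "1 - q\<^sup>2 = (cos \<alpha>)\<^sup>2 / K\<^sup>2"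
    proof -
      have "q\<^sup>2 = (c * sin \<alpha>)\<^sup>2 / K\<^sup>2" unfolding q_def by (simp add: power_divide)
      then have "1 - q\<^sup>2 = (K\<^sup>2 - (c * sin \<alpha>)\<^sup>2) / K\<^sup>2" using Kpos by (simp add: field_simps)
      then show ?thesis using K2 by (simp add: power_mult_distrib)
    qed
    finally have "(x * y)\<^sup>2 = (cos \<alpha> / (2 * K))\<^sup>2" by (simp add: power_divide power_mult_distrib)
    moreover have "0 \<le> x * y" using x0 y0 by simp
    moreover have "0 \<le> cos \<alpha> / (2 * K)" using cpos Kpos by simp
    ultimately show ?thesis using power2_eq_iff_nonneg by blast
  qed
  define gp where "gp i = (if i = 0 then C else S)" for i :: nat
  define hp where "hp i = (if i = 0 then - S else C)" for i :: nat
  define gm where "gm i = (if i = 0 then C else - S)" for i :: nat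
  define hm where "hm i = (if i = 0 then S else C)" for i :: nat
  note SCp = strat_core[OF D20 D30 D21 D31 mix0 mix1 n00 n11 c01, where g=gp and h=hp]
  note SCm = strat_core[OF D20 D30 D21 D31 mix0 mix1 n00 n11 c01, where g=gm and h=hm]
  have gpf: "(gp 0)\<^sup>2 + (gp 1)\<^sup>2 = 1" "hp 0 = - gp 1" "hp 1 = gp 0"
    unfolding gp_def hp_def using CS1 by simp_all
  have gmf: "(gm 0)\<^sup>2 + (gm 1)\<^sup>2 = 1" "hm 0 = - gm 1" "hm 1 = gm 0"
    unfolding gm_def hm_def using CS1 by simp_all
  let ?Ep = "EstS m N V0 V1 gp hp" and ?Em = "EstS m N V0 V1 gm hm" and ?\<psi> = "psiS x y \<phi>0 \<phi>1"
  have Rp: "prob_reveal0 (2*m) n N ?\<psi> ?Ep = (C * x)\<^sup>2 + (S * y)\<^sup>2 + 2 * (C * x) * (S * y) * c"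
    using SCp(2)[OF gpf, where x=x and y=y] unfolding gp_def by simp
  have Rm: "prob_reveal0 (2*m) n N ?\<psi> ?Em = (C * x)\<^sup>2 + (S * y)\<^sup>2 - 2 * (C * x) * (S * y) * c"
    using SCm(2)[OF gmf, where x=x and y=y] unfolding gm_def by simp
  have Dp: "prob_detect (2*m) n N v ?\<psi> ?Ep \<le> (1 - c\<^sup>2) * S\<^sup>2"
  proof -
    have "(1 - c\<^sup>2) * ((S * y)\<^sup>2 + (S * x)\<^sup>2) = (1 - c\<^sup>2) * S\<^sup>2 * (x\<^sup>2 + y\<^sup>2)"
      by (simp add: power_mult_distrib algebra_simps)
    then have "(1 - c\<^sup>2) * ((S * y)\<^sup>2 + (S * x)\<^sup>2) = (1 - c\<^sup>2) * S\<^sup>2" unfolding xy1 by simp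
    moreover have "gp 1 = S" unfolding gp_def by simp
    moreover have "prob_detect (2*m) n N v ?\<psi> ?Ep \<le> (1 - c\<^sup>2) * ((gp 1 * y)\<^sup>2 + (gp 1 * x)\<^sup>2)"
      by (rule SCp(3)[OF gpf])
    ultimately show ?thesis by metis
  qed
  have Dm: "prob_detect (2*m) n N v ?\<psi> ?Em \<le> (1 - c\<^sup>2) * S\<^sup>2"
  proof -
    have "(1 - c\<^sup>2) * ((- S * y)\<^sup>2 + (- S * x)\<^sup>2) = (1 - c\<^sup>2) * S\<^sup>2 * (x\<^sup>2 + y\<^sup>2)"
      by (simp add: power_mult_distrib algebra_simps)
    then have "(1 - c\<^sup>2) * ((- S * y)\<^sup>2 + (- S * x)\<^sup>2) = (1 - c\<^sup>2) * S\<^sup>2" unfolding xy1 by simp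
    moreover have "gm 1 = - S" unfolding gm_def by simp
    moreover have "prob_detect (2*m) n N v ?\<psi> ?Em \<le> (1 - c\<^sup>2) * ((gm 1 * y)\<^sup>2 + (gm 1 * x)\<^sup>2)"
      by (rule SCm(3)[OF gmf])
    ultimately show ?thesis by metis
  qed
  have Rm_half: "(C * x)\<^sup>2 + (S * y)\<^sup>2 - 2 * (C * x) * (S * y) * c = 1/2"
  proof -
    have "(C * x)\<^sup>2 + (S * y)\<^sup>2 - 2 * (C * x) * (S * y) * c = C\<^sup>2 * x\<^sup>2 + S\<^sup>2 * y\<^sup>2 - 2 * C * S * c * (x * y)"
      by (simp add: power_mult_distrib algebra_simps)
    also have "\<dots> = C\<^sup>2 * ((1 + q) / 2) + S\<^sup>2 * ((1 - q) / 2) - 2 * C * S * c * (cos \<alpha> / (2 * K))"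
      unfolding x2 y2 xy ..
    also have "\<dots> = (C\<^sup>2 + S\<^sup>2) / 2 + (C\<^sup>2 - S\<^sup>2) * q / 2 - (2 * S * C) * c * cos \<alpha> / (2 * K)"
      by (simp add: field_simps)
    also have "\<dots> = 1 / 2 + cos \<alpha> * (c * sin \<alpha> / K) / 2 - sin \<alpha> * c * cos \<alpha> / (2 * K)"
      unfolding CS1 cosA[symmetric] sinA[symmetric] q_def ..
    also have "\<dots> = 1 / 2" using Kpos by (simp add: field_simps)
    finally show ?thesis .
  qed
  have Rdiff: "((C * x)\<^sup>2 + (S * y)\<^sup>2 + 2 * (C * x) * (S * y) * c) - ((C * x)\<^sup>2 + (S * y)\<^sup>2 - 2 * (C * x) * (S * y) * c)
      = c * sin (2*\<alpha>) / (2 * K)"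
  proof -
    have "((C * x)\<^sup>2 + (S * y)\<^sup>2 + 2 * (C * x) * (S * y) * c) - ((C * x)\<^sup>2 + (S * y)\<^sup>2 - 2 * (C * x) * (S * y) * c)
        = 2 * (2 * S * C) * c * (x * y)" by (simp add: algebra_simps)
    also have "\<dots> = 2 * sin \<alpha> * c * (cos \<alpha> / (2 * K))" unfolding sinA[symmetric] xy ..
    also have "\<dots> = c * sin (2*\<alpha>) / (2 * K)" unfolding sin2A using Kpos by (simp add: field_simps)
    finally show ?thesis .
  qed
  have bound: "(1 - c\<^sup>2) * S\<^sup>2 \<le> (1 - f) * (sin \<alpha>)\<^sup>2 / 2" using det unfolding S_def .
  show ?thesis
  proof (rule exI[of _ "2*m"], rule exI[of _ ?\<psi>], rule exI[of _ "mixE t ?Ep ?Em"], rule exI[of _ ?Em], intro conjI)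
    show "unit_bivec (2*m) n ?\<psi>" by (rule unit_psiS[OF n00 n11 xy1])
    show "reveal_povm (2*m) N (mixE t ?Ep ?Em)"
      by (rule mix_povm[OF t0 t1 SCp(1)[OF gpf] SCm(1)[OF gmf]])
    show "reveal_povm (2*m) N ?Em" by (rule SCm(1)[OF gmf])
    show "prob_reveal0 (2*m) n N ?\<psi> ?Em = 1/2" unfolding Rm Rm_half ..
    show "prob_reveal0 (2*m) n N ?\<psi> (mixE t ?Ep ?Em) - prob_reveal0 (2*m) n N ?\<psi> ?Em = sqrt f * sin (2 * \<alpha>) / 2"
    proof -
      have "prob_reveal0 (2*m) n N ?\<psi> (mixE t ?Ep ?Em) - prob_reveal0 (2*m) n N ?\<psi> ?Em
          = t * (prob_reveal0 (2*m) n N ?\<psi> ?Ep - prob_reveal0 (2*m) n N ?\<psi> ?Em)"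
        unfolding reveal0_mix by (simp add: algebra_simps)
      also have "\<dots> = t * (c * sin (2*\<alpha>) / (2 * K))" unfolding Rp Rm Rdiff ..
      finally show ?thesis using teq unfolding K_def by simp
    qed
    show "prob_detect (2*m) n N v ?\<psi> (mixE t ?Ep ?Em) \<le> (1 - f) * (sin \<alpha>)\<^sup>2 / 2"
    proof -
      have "t * prob_detect (2*m) n N v ?\<psi> ?Ep \<le> t * ((1 - c\<^sup>2) * S\<^sup>2)"
        using Dp t0 by (intro mult_left_mono)
      moreover have "(1 - t) * prob_detect (2*m) n N v ?\<psi> ?Em \<le> (1 - t) * ((1 - c\<^sup>2) * S\<^sup>2)"
        using Dm t1 by (intro mult_left_mono) auto
      ultimately have "prob_detect (2*m) n N v ?\<psi> (mixE t ?Ep ?Em) \<le> (1 - c\<^sup>2) * S\<^sup>2"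
        unfolding detect_mix by (simp add: algebra_simps)
      then show ?thesis using bound by linarith
    qed
    show "prob_detect (2*m) n N v ?\<psi> ?Em \<le> (1 - f) * (sin \<alpha>)\<^sup>2 / 2"
      using Dm bound by linarith
  qed
qed

lemma aligned_pair:
  assumes M0: "is_mixture n N0 p0 v0" and M1: "is_mixture n N1 p1 v1"
    and P0: "purification m n (mixture_dm N0 p0 v0) \<phi>0" and P1: "purification m n (mixture_dm N1 p1 v1) \<phi>1"
  shows "\<exists>\<psi>. purification m n (mixture_dm N1 p1 v1) \<psi> \<and>
     bi_inner m n \<phi>0 \<psi> = complex_of_real (cmod (bi_inner m n \<phi>0 \<phi>1)) \<and> cmod (bi_inner m n \<phi>0 \<phi>1) \<le> 1"
proof -
  have "(cmod (bi_inner m n \<phi>0 \<phi>1))\<^sup>2 \<le> 1"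
    by (rule bi_CS[OF purif_norm[OF P0 M0] purif_norm[OF P1 M1]])
  then have "cmod (bi_inner m n \<phi>0 \<phi>1) \<le> 1" by (simp add: power_le_one_iff)
  then show ?thesis using phase[OF P1, of \<phi>0] by blast
qed

theorem theorem8:
  fixes n :: nat and N :: "nat \<Rightarrow> nat" and p :: "nat \<Rightarrow> nat \<Rightarrow> real"
    and v :: "nat \<Rightarrow> nat \<Rightarrow> nat \<Rightarrow> complex" and \<alpha> :: real
  assumes mix0: "is_mixture n (N 0) (p 0) (v 0)"
    and mix1: "is_mixture n (N 1) (p 1) (v 1)"
    and alpha: "0 \<le> \<alpha>" "\<alpha> \<le> pi / 4"
  defines "f \<equiv> fidelity n (mixture_dm (N 0) (p 0) (v 0)) (mixture_dm (N 1) (p 1) (v 1))"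
  shows "\<exists>m psi E0 E1.
     unit_bivec m n psi \<and> reveal_povm m N E0 \<and> reveal_povm m N E1 \<and>
     prob_reveal0 m n N psi E1 = 1 / 2 \<and>
     prob_reveal0 m n N psi E0 - prob_reveal0 m n N psi E1 = sqrt f * sin (2 * \<alpha>) / 2 \<and>
     prob_detect m n N v psi E0 \<le> (1 - f) * (sin \<alpha>)\<^sup>2 / 2 \<and>
     prob_detect m n N v psi E1 \<le> (1 - f) * (sin \<alpha>)\<^sup>2 / 2"
proof -
  let ?r0 = "mixture_dm (N 0) (p 0) (v 0)" and ?r1 = "mixture_dm (N 1) (p 1) (v 1)"
  have fle1: "f \<le> 1" unfolding f_def by (rule fid_facts(2)[OF mix0 mix1])
  have f0: "0 \<le> f" unfolding f_def by (rule fid_facts(3)[OF mix0 mix1])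
  have approx: "\<exists>m \<phi>0 \<phi>1. purification m n ?r0 \<phi>0 \<and> purification m n ?r1 \<phi>1 \<and> e < (cmod (bi_inner m n \<phi>0 \<phi>1))\<^sup>2"
    if "e < f" for e using fid_facts(4)[OF mix0 mix1] that unfolding f_def by blast
  have pipos: "pi > 0" by (rule pi_gt_zero)
  have cpos: "cos \<alpha> > 0" using alpha pipos by (intro cos_gt_zero_pi) linarith+
  have spos: "sin \<alpha> \<ge> 0" using alpha pipos by (intro sin_ge_zero) linarith+
  define S where "S = sin (\<alpha>/2)"
  define C where "C = cos (\<alpha>/2)"
  have half: "(sin \<alpha>)\<^sup>2 / 2 = S\<^sup>2 * (1 + cos \<alpha>)"
  proof -
    have sinA: "sin \<alpha> = 2 * S * C" unfolding S_def C_def using sin_double[of "\<alpha>/2"] by simp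
    have cosA: "cos \<alpha> = C\<^sup>2 - S\<^sup>2" unfolding S_def C_def using cos_double[of "\<alpha>/2"] by simp
    have CS1: "C\<^sup>2 + S\<^sup>2 = 1" unfolding C_def S_def by (simp add: add.commute)
    have e: "1 + cos \<alpha> = 2 * C\<^sup>2" using cosA CS1 by linarith
    show ?thesis unfolding e sinA by (simp add: power_mult_distrib algebra_simps)
  qed
  show ?thesis
  proof (cases "f = 0 \<or> \<alpha> = 0")
    case True
    obtain m \<phi>0 \<phi>1 where P0: "purification m n ?r0 \<phi>0" and P1: "purification m n ?r1 \<phi>1"
      using purif_nonempty[OF mix0 mix1] by blast
    obtain \<psi> where P1': "purification m n ?r1 \<psi>"
      and c01: "bi_inner m n \<phi>0 \<psi> = complex_of_real (cmod (bi_inner m n \<phi>0 \<phi>1))"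
      and c1: "cmod (bi_inner m n \<phi>0 \<phi>1) \<le> 1"
      using aligned_pair[OF mix0 mix1 P0 P1] by blast
    define c where "c = cmod (bi_inner m n \<phi>0 \<phi>1)"
    have c0: "0 \<le> c" unfolding c_def by simp
    have teq: "0 * (c * sin (2*\<alpha>) / (2 * sqrt (c\<^sup>2 * (sin \<alpha>)\<^sup>2 + (cos \<alpha>)\<^sup>2))) = sqrt f * sin (2*\<alpha>) / 2"
      using True by auto
    have det: "(1 - c\<^sup>2) * (sin (\<alpha>/2))\<^sup>2 \<le> (1 - f) * (sin \<alpha>)\<^sup>2 / 2"
      using True
    proof
      assume "f = 0"
      have "(1 - c\<^sup>2) * S\<^sup>2 \<le> 1 * S\<^sup>2" using c0 by (intro mult_right_mono) auto
      also have "\<dots> \<le> S\<^sup>2 * (1 + cos \<alpha>)" using cpos by (simp add: mult_le_cancel_left1)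
      finally show ?thesis using half \<open>f = 0\<close> unfolding S_def by simp
    next
      assume "\<alpha> = 0"
      then show ?thesis by simp
    qed
    show ?thesis
      by (rule final_pair[OF mix0 mix1 alpha P0 P1' c01[folded c_def] c0 c1[folded c_def] _ _ teq det]) simp_all
  next
    case False
    then have fne0: "f \<noteq> 0" and ane0: "\<alpha> \<noteq> 0" by auto
    have apos: "\<alpha> > 0" using ane0 alpha by simp
    have sposs: "sin \<alpha> > 0" using apos alpha pipos by (intro sin_gt_zero) linarith+
    show ?thesis
    proof (cases "f = 1")
      case True
      have eqr: "?r0 j k = ?r1 j k" if "j < n" "k < n" for j k
        using fid1[OF mix0 mix1 _ that] True unfolding f_def by blast
      define \<phi> where "\<phi> a k = complex_of_real (sqrt (p 0 a)) * v 0 a k" for a k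
      have P0: "purification (N 0) n ?r0 \<phi>"
        using honest_purif[OF mix0] unfolding \<phi>_def by simp
      have P1: "purification (N 0) n ?r1 \<phi>"
        using P0 eqr unfolding purification_def by simp
      have c01: "bi_inner (N 0) n \<phi> \<phi> = complex_of_real 1" using purif_norm[OF P0 mix0] by simp
      have teq: "1 * (1 * sin (2*\<alpha>) / (2 * sqrt (1\<^sup>2 * (sin \<alpha>)\<^sup>2 + (cos \<alpha>)\<^sup>2))) = sqrt f * sin (2*\<alpha>) / 2"
        using True by simp
      have det: "(1 - 1\<^sup>2) * (sin (\<alpha>/2))\<^sup>2 \<le> (1 - f) * (sin \<alpha>)\<^sup>2 / 2" using True by simp
      show ?thesis
        by (rule final_pair[OF mix0 mix1 alpha P0 P1 c01 _ _ _ _ teq det]) simp_all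
    next
      case False
      then have fl1: "f < 1" using fle1 by simp
      have fpos: "f > 0" using f0 fne0 by simp
      define th1 where "th1 = f * (cos \<alpha>)\<^sup>2 / (1 - f * (sin \<alpha>)\<^sup>2)"
      define th2 where "th2 = f - (1 - f) * cos \<alpha>"
      have s21: "(sin \<alpha>)\<^sup>2 \<le> 1" using sin_cos_squared_add[of \<alpha>] by (metis le_add_same_cancel1 zero_le_power2)
      have den: "1 - f * (sin \<alpha>)\<^sup>2 > 0"
      proof -
        have "f * (sin \<alpha>)\<^sup>2 \<le> f * 1" using s21 f0 by (intro mult_left_mono) auto
        then show ?thesis using fl1 by simp
      qed
      have th1f: "th1 < f"
      proof -
        have "f * (sin \<alpha>)\<^sup>2 < 1 * (sin \<alpha>)\<^sup>2" using fl1 sposs by (intro mult_strict_right_mono) auto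
        then have "(cos \<alpha>)\<^sup>2 < 1 - f * (sin \<alpha>)\<^sup>2" using sin_cos_squared_add[of \<alpha>] by linarith
        then have "f * (cos \<alpha>)\<^sup>2 < f * (1 - f * (sin \<alpha>)\<^sup>2)" using fpos by simp
        then show ?thesis unfolding th1_def using den by (simp add: divide_less_eq mult.commute)
      qed
      have th1pos: "th1 \<ge> 0" unfolding th1_def using den f0 by simp
      have th2f: "th2 < f" unfolding th2_def using fl1 cpos by simp
      obtain m \<phi>0 \<phi>1 where P0: "purification m n ?r0 \<phi>0" and P1: "purification m n ?r1 \<phi>1"
        and big: "max th1 th2 < (cmod (bi_inner m n \<phi>0 \<phi>1))\<^sup>2"
        using approx[of "max th1 th2"] th1f th2f by auto
      obtain \<psi> where P1': "purification m n ?r1 \<psi>"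
        and c01: "bi_inner m n \<phi>0 \<psi> = complex_of_real (cmod (bi_inner m n \<phi>0 \<phi>1))"
        and c1: "cmod (bi_inner m n \<phi>0 \<phi>1) \<le> 1"
        using aligned_pair[OF mix0 mix1 P0 P1] by blast
      define c where "c = cmod (bi_inner m n \<phi>0 \<phi>1)"
      have c0: "0 \<le> c" unfolding c_def by simp
      have cth1: "th1 < c\<^sup>2" and cth2: "th2 < c\<^sup>2" using big unfolding c_def by auto
      have cpos': "c > 0" using cth1 th1pos c0 by (cases "c = 0") auto
      define K where "K = sqrt (c\<^sup>2 * (sin \<alpha>)\<^sup>2 + (cos \<alpha>)\<^sup>2)"
      have Kpos: "K > 0" unfolding K_def using cpos by (intro real_sqrt_gt_zero add_nonneg_pos) auto
      have K2: "K\<^sup>2 = c\<^sup>2 * (sin \<alpha>)\<^sup>2 + (cos \<alpha>)\<^sup>2" unfolding K_def by simp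
      define t where "t = sqrt f * K / c"
      have t0: "0 \<le> t" unfolding t_def using Kpos cpos' f0 by simp
      have t1: "t \<le> 1"
      proof -
        have "f * (cos \<alpha>)\<^sup>2 < c\<^sup>2 * (1 - f * (sin \<alpha>)\<^sup>2)"
          using cth1 den unfolding th1_def by (simp add: divide_less_eq mult.commute)
        then have "f * K\<^sup>2 \<le> c\<^sup>2" unfolding K2 by (simp add: algebra_simps)
        then have "(sqrt f * K)\<^sup>2 \<le> c\<^sup>2" using f0 by (simp add: power_mult_distrib)
        then have "sqrt f * K \<le> c" using c0 by (rule power2_le_imp_le)
        then show ?thesis unfolding t_def using cpos' by simp
      qed
      have teq: "t * (c * sin (2*\<alpha>) / (2 * sqrt (c\<^sup>2 * (sin \<alpha>)\<^sup>2 + (cos \<alpha>)\<^sup>2))) = sqrt f * sin (2*\<alpha>) / 2"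
        unfolding K_def[symmetric] t_def using Kpos cpos' by (simp add: field_simps)
      have det: "(1 - c\<^sup>2) * (sin (\<alpha>/2))\<^sup>2 \<le> (1 - f) * (sin \<alpha>)\<^sup>2 / 2"
      proof -
        have "1 - c\<^sup>2 \<le> (1 - f) * (1 + cos \<alpha>)" using cth2 unfolding th2_def by (simp add: algebra_simps)
        then have "(1 - c\<^sup>2) * S\<^sup>2 \<le> ((1 - f) * (1 + cos \<alpha>)) * S\<^sup>2" by (intro mult_right_mono) auto
        also have "\<dots> = (1 - f) * (sin \<alpha>)\<^sup>2 / 2" using half by (simp add: algebra_simps)
        finally show ?thesis unfolding S_def .
      qed
      show ?thesis
        by (rule final_pair[OF mix0 mix1 alpha P0 P1' c01[folded c_def] c0 c1[folded c_def] t0 t1 teq det])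
    qed
  qed
qed

end
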